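(* Let $K\ge 2$, let $\Theta=\{(\theta_1,\ldots,\theta_K):\sum_{k=1}^K\theta_k=1,\ \theta_k\ge 0\}$ be the $(K-1)$-simplex, and let $X_1,\ldots,X_n\in\{1,\ldots,K\}$ be an observed sample from $\mathrm{Multinomial}(1,\theta_1,\ldots,\theta_K)$ (i.e. i.i.d. with $\Pr(X_i=k\mid\theta)=\theta_k$). Consider the random set $$\mathbf e_X(U)=\{\theta\in\Theta:\ \theta_{X_i}>U_i,\ i=1,\ldots,n\},$$ where $U=(U_1,\ldots,U_n)$ has the law of $n$ i.i.d. $\mathrm{Unif}(0,1)$ variables conditioned on the event $\mathbf e_X(U)\neq\emptyset$. Then this random set is distributed as $$\mathbf e_N(Z)=\{\theta\in\Theta:\ \theta_1\ge Z_1,\ldots,\theta_K\ge Z_K\},$$ where $(Z_0,Z_1,\ldots,Z_K)\sim\mathrm{Dirichlet}(1,N_1,\ldots,N_K)$ and $N_k=\#\{i: X_i=k\}$ are the cell counts, $k=1,\ldots,K$. Here $Z_k=0$ with probability one if and only if $N_k=0$.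
   Context: The Dirichlet distribution with some parameters equal to zero is understood in the degenerate sense: a coordinate whose parameter is $0$ equals $0$ almost surely, and the remaining coordinates follow the Dirichlet distribution with the positive parameters. *)

theory Defs
  imports "HOL-Probability.Probability"
begin

definition param_simplex :: "nat \<Rightarrow> (nat \<Rightarrow> real) set" where
  "param_simplex K = {\<theta>. (\<forall>k. k \<notin> {1..K} \<longrightarrow> \<theta> k = 0) \<and> (\<forall>k\<in>{1..K}. \<theta> k \<ge> 0)
                    \<and> (\<Sum>k\<in>{1..K}. \<theta> k) = 1}"

definition cell_count :: "nat \<Rightarrow> (nat \<Rightarrow> nat) \<Rightarrow> nat \<Rightarrow> nat" where
  "cell_count n X k = card {i\<in>{1..n}. X i = k}"

definition eX :: "nat \<Rightarrow> nat \<Rightarrow> (nat \<Rightarrow> nat) \<Rightarrow> (nat \<Rightarrow> real) \<Rightarrow> (nat \<Rightarrow> real) set" where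
  "eX K n X u = {\<theta>\<in>param_simplex K. \<forall>i\<in>{1..n}. \<theta> (X i) > u i}"

definition eN :: "nat \<Rightarrow> (nat \<Rightarrow> real) \<Rightarrow> (nat \<Rightarrow> real) set" where
  "eN K z = {\<theta>\<in>param_simplex K. \<forall>k\<in>{1..K}. \<theta> k \<ge> z k}"

definition unif_cube :: "nat \<Rightarrow> (nat \<Rightarrow> real) measure" where
  "unif_cube n = PiM {1..n} (\<lambda>_. uniform_measure lborel {0..1})"

definition gamma_density :: "real \<Rightarrow> real \<Rightarrow> real" where
  "gamma_density a x = (if x > 0 then x powr (a - 1) * exp (- x) / Gamma a else 0)"

text \<open>Dirichlet distribution with parameters alpha_j (j in I, alpha_j >= 0), in the degenerate
  sense for zero parameters: constructed as normalised independent Gamma(alpha_j) variables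
  over the positive parameters; coordinates with alpha_j = 0 are identically 0.\<close>
definition dirichlet :: "nat set \<Rightarrow> (nat \<Rightarrow> real) \<Rightarrow> (nat \<Rightarrow> real) measure" where
  "dirichlet I \<alpha> =
     distr (PiM {j\<in>I. \<alpha> j > 0} (\<lambda>j. density lborel (gamma_density (\<alpha> j))))
           (PiM I (\<lambda>_. borel))
           (\<lambda>g. \<lambda>j\<in>I. if \<alpha> j > 0 then g j / (\<Sum>i\<in>{j\<in>I. \<alpha> j > 0}. g i) else 0)"

text \<open>Effros sigma-algebra on sets of parameter vectors (the standard measurable structure
  for random (closed) sets): generated by the hitting events {S. S meets G}, G open.\<close>
definition effros :: "(nat \<Rightarrow> real) set measure" where
  "effros = sigma UNIV {{S. S \<inter> G \<noteq> {}} | G. open G}"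

end

theory Submission
  imports Defs "HOL-Probability.Probability"
begin

definition effgen :: "(nat \<Rightarrow> real) set set set" where
  "effgen = {{S. S \<inter> G \<noteq> {}} | G. open G}"

lemma sets_effros: "sets effros = sigma_sets UNIV effgen"
  unfolding effros_def effgen_def by (rule sets_measure_of) auto

lemma space_effros: "space effros = UNIV"
  unfolding effros_def by (rule space_measure_of) auto

lemma effros_invariant:
  assumes "\<And>G. open G \<Longrightarrow> (S \<inter> G \<noteq> {}) = (T \<inter> G \<noteq> {})"
    and "A \<in> sets effros"
  shows "S \<in> A \<longleftrightarrow> T \<in> A"
proof -
  have "A \<in> sigma_sets UNIV effgen" using assms(2) sets_effros by simp
  then show ?thesis
  proof induction
    case (Basic a)
    then obtain G where "open G" "a = {S. S \<inter> G \<noteq> {}}" unfolding effgen_def by auto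
    then show ?case using assms(1) by auto
  qed auto
qed

lemma measurable_effros:
  assumes "\<And>G. open G \<Longrightarrow> {x \<in> space M. f x \<inter> G \<noteq> {}} \<in> sets M"
  shows "f \<in> measurable M effros"
  unfolding effros_def
proof (rule measurable_measure_of)
  show "\<And>A. A \<in> {{S. S \<inter> G \<noteq> {}} |G::(nat\<Rightarrow>real) set. open G} \<Longrightarrow> f -` A \<inter> space M \<in> sets M"
  proof -
    fix A assume "A \<in> {{S. S \<inter> G \<noteq> {}} |G::(nat\<Rightarrow>real) set. open G}"
    then obtain G where "open G" "A = {S. S \<inter> G \<noteq> {}}" by auto
    moreover have "f -` {S. S \<inter> G \<noteq> {}} \<inter> space M = {x \<in> space M. f x \<inter> G \<noteq> {}}" by auto
    ultimately show "f -` A \<inter> space M \<in> sets M" using assms by auto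
  qed
qed auto

lemma hit_sets:
  fixes T :: "(nat \<Rightarrow> real) set"
  assumes J: "finite J" "J \<subseteq> I"
  shows "{w \<in> space (PiM I (\<lambda>_. borel)). \<exists>\<theta>\<in>T. \<forall>k\<in>J. w k < \<theta> k} \<in> sets (PiM I (\<lambda>_. borel::real measure))"
proof -
  define Q where "Q = {q \<in> PiE J (\<lambda>_. Rats). \<exists>\<theta>\<in>T. \<forall>k\<in>J. q k \<le> \<theta> k}"
  have cQ: "countable Q" unfolding Q_def
  proof (rule countable_subset)
    show "countable (PiE J (\<lambda>_. Rats))" by (rule countable_PiE[OF J(1) countable_rat])
  qed (rule Collect_restrict)
  have eq: "{w \<in> space (PiM I (\<lambda>_. borel)). \<exists>\<theta>\<in>T. \<forall>k\<in>J. w k < \<theta> k}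
     = (\<Union>q\<in>Q. {w \<in> space (PiM I (\<lambda>_. borel)). \<forall>k\<in>J. w k < q k})"
  proof (intro equalityI subsetI)
    fix w assume "w \<in> {w \<in> space (PiM I (\<lambda>_. borel)). \<exists>\<theta>\<in>T. \<forall>k\<in>J. w k < \<theta> k}"
    then obtain \<theta> where w: "w \<in> space (PiM I (\<lambda>_. borel))" "\<theta> \<in> T" "\<forall>k\<in>J. w k < \<theta> k" by auto
    have "\<forall>k\<in>J. \<exists>r\<in>Rats. w k < r \<and> r < \<theta> k"
      using w(3) Rats_dense_in_real by blast
    then obtain q where q: "q \<in> PiE J (\<lambda>_. Rats)" "\<forall>k\<in>J. w k < q k \<and> q k < \<theta> k"
      using PiE_choice[of J "\<lambda>_. Rats" "\<lambda>k r. w k < r \<and> r < \<theta> k"] by blast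
    have "\<forall>k\<in>J. q k \<le> \<theta> k" using q(2) by (simp add: less_imp_le)
    then have "q \<in> Q" unfolding Q_def using q(1) w(2) by (intro CollectI conjI bexI[of _ \<theta>])
    then show "w \<in> (\<Union>q\<in>Q. {w \<in> space (PiM I (\<lambda>_. borel)). \<forall>k\<in>J. w k < q k})" using q w by auto
  next
    fix w assume "w \<in> (\<Union>q\<in>Q. {w \<in> space (PiM I (\<lambda>_. borel)). \<forall>k\<in>J. w k < q k})"
    then obtain q where "q \<in> Q" "w \<in> space (PiM I (\<lambda>_. borel))" "\<forall>k\<in>J. w k < q k" by auto
    then show "w \<in> {w \<in> space (PiM I (\<lambda>_. borel)). \<exists>\<theta>\<in>T. \<forall>k\<in>J. w k < \<theta> k}"
      unfolding Q_def by (smt (verit) dual_order.strict_trans2 mem_Collect_eq)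
  qed
  have rect: "{w \<in> space (PiM I (\<lambda>_. borel)). \<forall>k\<in>J. w k < q k} \<in> sets (PiM I (\<lambda>_. borel::real measure))" for q
  proof -
    have "Measurable.pred (PiM I (\<lambda>_. borel::real measure)) (\<lambda>w. \<forall>k\<in>J. w k < q k)"
      using J by (intro pred_intros_finite) (auto intro!: measurable_component_singleton)
    then show ?thesis by (simp add: pred_def)
  qed
  show ?thesis unfolding eq by (rule sets.countable_UN''[OF cQ rect])
qed

lemma simplex_nonneg: "\<theta> \<in> param_simplex K \<Longrightarrow> \<theta> k \<ge> 0"
  unfolding param_simplex_def by (cases "k \<in> {1..K}") auto

lemma simplex_out: "\<theta> \<in> param_simplex K \<Longrightarrow> k \<notin> {1..K} \<Longrightarrow> \<theta> k = 0"
  unfolding param_simplex_def by auto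

lemma simplex_sum: "\<theta> \<in> param_simplex K \<Longrightarrow> (\<Sum>k\<in>{1..K}. \<theta> k) = 1"
  unfolding param_simplex_def by auto

lemma eN_perturb:
  fixes z :: "nat \<Rightarrow> real" and G :: "(nat \<Rightarrow> real) set"
  assumes K: "K \<ge> 1" and G: "open G"
    and sig: "(\<Sum>k\<in>{1..K}. max (z k) 0) < 1"
    and th: "\<theta> \<in> eN K z \<inter> G"
  shows "\<exists>\<theta>'\<in>param_simplex K \<inter> G. \<forall>k\<in>{1..K}. z k < \<theta>' k"
proof -
  define \<sigma> where "\<sigma> = (\<Sum>k\<in>{1..K}. max (z k) 0)"
  define c where "c = (\<lambda>k. if k \<in> {1..K} then max (z k) 0 + (1 - \<sigma>) / K else 0)"
  define p where "p = (\<lambda>t::real. \<lambda>k. (1 - t) * \<theta> k + t * c k)"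
  have th1: "\<theta> \<in> param_simplex K" "\<theta> \<in> G" "\<forall>k\<in>{1..K}. z k \<le> \<theta> k"
    using th unfolding eN_def by auto
  have Kpos: "real K > 0" using K by simp
  have csum: "(\<Sum>k\<in>{1..K}. c k) = 1"
  proof -
    have "(\<Sum>k\<in>{1..K}. c k) = (\<Sum>k\<in>{1..K}. max (z k) 0 + (1 - \<sigma>) / K)"
      unfolding c_def by (rule sum.cong) auto
    also have "\<dots> = \<sigma> + real K * ((1 - \<sigma>) / K)" by (simp add: sum.distrib \<sigma>_def)
    also have "\<dots> = 1" using Kpos by simp
    finally show ?thesis .
  qed
  have pos: "(1 - \<sigma>) / K > 0" using sig Kpos unfolding \<sigma>_def by auto
  have cgt: "\<forall>k\<in>{1..K}. z k < c k" "\<forall>k. c k \<ge> 0"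
    using pos unfolding c_def by (auto simp: add_pos_nonneg max_def)
  have "continuous_on UNIV p" unfolding p_def by (intro continuous_intros)
  then have "open (p -` G)" using G by (rule open_vimage[rotated])
  moreover have "p 0 = \<theta>" unfolding p_def by auto
  ultimately have "0 \<in> p -` G" "open (p -` G)" using th1 by auto
  then obtain e where e: "e > 0" "\<forall>y. dist y 0 < e \<longrightarrow> y \<in> p -` G"
    unfolding open_dist by blast
  define t where "t = min (e/2) 1"
  have t: "t > 0" "t \<le> 1" "dist t 0 < e" using e unfolding t_def by auto
  have "p t \<in> G" using e t by auto
  moreover have "p t \<in> param_simplex K"
  proof -
    have "\<forall>k. k \<notin> {1..K} \<longrightarrow> p t k = 0"
      using simplex_out[OF th1(1)] unfolding p_def c_def by auto
    moreover have "\<forall>k\<in>{1..K}. p t k \<ge> 0"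
      using simplex_nonneg[OF th1(1)] cgt t unfolding p_def by (auto intro!: add_nonneg_nonneg mult_nonneg_nonneg)
    moreover have "(\<Sum>k\<in>{1..K}. p t k) = 1"
      unfolding p_def using simplex_sum[OF th1(1)] csum
      by (simp add: sum.distrib sum_distrib_left[symmetric])
    ultimately show ?thesis unfolding param_simplex_def by blast
  qed
  moreover have "\<forall>k\<in>{1..K}. z k < p t k"
  proof
    fix k assume k: "k \<in> {1..K}"
    have "(1 - t) * z k \<le> (1 - t) * \<theta> k" using th1(3) k t by (intro mult_left_mono) auto
    moreover have "t * z k < t * c k" using cgt k t by auto
    ultimately show "z k < p t k" unfolding p_def by (simp add: algebra_simps)
  qed
  ultimately show ?thesis by blast
qed

lemma eN_hit_small:
  fixes z :: "nat \<Rightarrow> real" and G :: "(nat \<Rightarrow> real) set"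
  assumes K: "K \<ge> 1" and G: "open G"
    and sig: "(\<Sum>k\<in>{1..K}. max (z k) 0) < 1"
  shows "(eN K z \<inter> G \<noteq> {}) \<longleftrightarrow> (\<exists>\<theta>\<in>param_simplex K \<inter> G. \<forall>k\<in>{1..K}. z k < \<theta> k)"
proof
  assume "eN K z \<inter> G \<noteq> {}"
  then obtain \<theta> where "\<theta> \<in> eN K z \<inter> G" by blast
  then show "\<exists>\<theta>\<in>param_simplex K \<inter> G. \<forall>k\<in>{1..K}. z k < \<theta> k" using eN_perturb[OF K G sig] by blast
next
  assume "\<exists>\<theta>\<in>param_simplex K \<inter> G. \<forall>k\<in>{1..K}. z k < \<theta> k"
  then obtain \<theta> where "\<theta> \<in> param_simplex K" "\<theta> \<in> G" "\<forall>k\<in>{1..K}. z k < \<theta> k" by blast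
  then have "\<theta> \<in> eN K z \<inter> G" unfolding eN_def by (auto intro: less_imp_le)
  then show "eN K z \<inter> G \<noteq> {}" by blast
qed

lemma eN_big:
  fixes z :: "nat \<Rightarrow> real"
  assumes sig: "(\<Sum>k\<in>{1..K}. max (z k) 0) > 1"
  shows "eN K z = {}"
proof (rule ccontr)
  assume "eN K z \<noteq> {}"
  then obtain \<theta> where th: "\<theta> \<in> param_simplex K" "\<forall>k\<in>{1..K}. z k \<le> \<theta> k" unfolding eN_def by blast
  have "(\<Sum>k\<in>{1..K}. max (z k) 0) \<le> (\<Sum>k\<in>{1..K}. \<theta> k)"
    using th simplex_nonneg[OF th(1)] by (intro sum_mono) auto
  then show False using simplex_sum[OF th(1)] sig by simp
qed

lemma eN_eq:
  fixes z :: "nat \<Rightarrow> real"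
  assumes sig: "(\<Sum>k\<in>{1..K}. max (z k) 0) = 1"
  shows "eN K z = {\<lambda>k. if k \<in> {1..K} then max (z k) 0 else 0}"
proof -
  define z' where "z' = (\<lambda>k. if k \<in> {1..K} then max (z k) 0 else 0)"
  have "z' \<in> eN K z"
    unfolding eN_def param_simplex_def z'_def using sig by auto
  moreover have "\<theta> = z'" if th0: "\<theta> \<in> eN K z" for \<theta>
  proof
    fix k
    have th: "\<theta> \<in> param_simplex K" "\<forall>k\<in>{1..K}. z k \<le> \<theta> k" using th0 unfolding eN_def by auto
    have le: "\<forall>k\<in>{1..K}. max (z k) 0 \<le> \<theta> k" using th simplex_nonneg[OF th(1)] by auto
    have "(\<Sum>k\<in>{1..K}. \<theta> k - max (z k) 0) = 0"
      using simplex_sum[OF th(1)] sig by (simp add: sum_subtractf)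
    then have "\<forall>k\<in>{1..K}. \<theta> k - max (z k) 0 = 0"
      using le by (subst (asm) sum_nonneg_eq_0_iff) auto
    then show "\<theta> k = z' k" unfolding z'_def using simplex_out[OF th(1)] by (cases "k \<in> {1..K}") auto
  qed
  ultimately show ?thesis unfolding z'_def by blast
qed

definition Fp :: "nat \<Rightarrow> nat set \<Rightarrow> (nat \<Rightarrow> real) \<Rightarrow> (nat \<Rightarrow> real) set" where
  "Fp K P w = {\<theta>\<in>param_simplex K. \<forall>k\<in>P. w k < \<theta> k}"

lemma Fp_measurable:
  assumes "finite P"
  shows "Fp K P \<in> measurable (PiM P (\<lambda>_. borel)) effros"
proof (rule measurable_effros)
  fix G :: "(nat \<Rightarrow> real) set" assume "open G"
  have "{x \<in> space (PiM P (\<lambda>_. borel)). Fp K P x \<inter> G \<noteq> {}}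
     = {w \<in> space (PiM P (\<lambda>_. borel)). \<exists>\<theta>\<in>param_simplex K \<inter> G. \<forall>k\<in>P. w k < \<theta> k}"
    unfolding Fp_def by blast
  also have "\<dots> \<in> sets (PiM P (\<lambda>_. borel))" by (rule hit_sets[OF assms order_refl])
  finally show "{x \<in> space (PiM P (\<lambda>_. borel)). Fp K P x \<inter> G \<noteq> {}} \<in> sets (PiM P (\<lambda>_. borel))" .
qed

lemma eN_measurable:
  assumes K: "K \<ge> 1" and I: "finite I" "{1..K} \<subseteq> I"
  shows "eN K \<in> measurable (PiM I (\<lambda>_. borel)) effros"
proof (rule measurable_effros)
  fix G :: "(nat \<Rightarrow> real) set" assume G: "open G"
  let ?M = "PiM I (\<lambda>_. borel::real measure)"
  define sg where "sg = (\<lambda>z::nat\<Rightarrow>real. \<Sum>k\<in>{1..K}. max (z k) 0)"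
  define zs where "zs = (\<lambda>z::nat\<Rightarrow>real. \<lambda>k. if k \<in> {1..K} then max (z k) 0 else 0)"
  have sg_m: "sg \<in> borel_measurable ?M" unfolding sg_def
    using I by (intro borel_measurable_sum borel_measurable_max measurable_component_singleton) auto
  have zs_m: "zs \<in> borel_measurable ?M" unfolding zs_def
  proof (rule measurable_coordinatewise_then_product)
    fix k
    show "(\<lambda>x. if k \<in> {1..K} then max (x k) 0 else 0) \<in> borel_measurable ?M"
      using I by (cases "k \<in> {1..K}") (auto intro!: borel_measurable_max measurable_component_singleton)
  qed
  have eq: "{x \<in> space ?M. eN K x \<inter> G \<noteq> {}}
     = ({x \<in> space ?M. sg x < 1} \<inter> {w \<in> space ?M. \<exists>\<theta>\<in>param_simplex K \<inter> G. \<forall>k\<in>{1..K}. w k < \<theta> k})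
       \<union> {x \<in> space ?M. sg x = 1 \<and> zs x \<in> G}"
  proof -
    have "eN K x \<inter> G \<noteq> {} \<longleftrightarrow> (sg x < 1 \<and> (\<exists>\<theta>\<in>param_simplex K \<inter> G. \<forall>k\<in>{1..K}. x k < \<theta> k)) \<or> (sg x = 1 \<and> zs x \<in> G)" for x
    proof (cases "sg x < 1")
      case True then show ?thesis using eN_hit_small[OF K G, of x] unfolding sg_def by auto
    next
      case False
      show ?thesis
      proof (cases "sg x = 1")
        case True then show ?thesis using eN_eq[where K=K and z=x] unfolding sg_def zs_def by auto
      next
        case False
        then have "sg x > 1" using \<open>\<not> sg x < 1\<close> by simp
        then show ?thesis using eN_big[where K=K and z=x] False unfolding sg_def by auto
      qed
    qed
    then show ?thesis by blast
  qed
  have s1: "{x \<in> space ?M. sg x < 1} \<in> sets ?M" using sg_m by measurable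
  have s2: "{x \<in> space ?M. sg x = 1 \<and> zs x \<in> G} \<in> sets ?M"
  proof -
    have "G \<in> sets borel" using G by simp
    then have p1: "Measurable.pred ?M (\<lambda>x. zs x \<in> G)" using zs_m by measurable
    have p2: "Measurable.pred ?M (\<lambda>x. sg x = 1)" using sg_m by measurable
    have "Measurable.pred ?M (\<lambda>x. sg x = 1 \<and> zs x \<in> G)" by (rule pred_intros_logic(3)[OF p2 p1])
    then show ?thesis by (simp add: pred_def)
  qed
  show "{x \<in> space ?M. eN K x \<inter> G \<noteq> {}} \<in> sets ?M"
    unfolding eq using s1 s2 hit_sets[OF finite_subset[OF I(2) I(1)] I(2), of "param_simplex K \<inter> G"]
    by (intro sets.Un sets.Int) auto
qed

lemma PiM_lborel_scale:
  fixes c :: real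
  assumes c: "c > 0" and I: "finite I"
    and F: "F \<in> borel_measurable (PiM I (\<lambda>_. lborel))"
  shows "(\<integral>\<^sup>+x. F x \<partial>PiM I (\<lambda>_. lborel)) =
         ennreal (c ^ card I) * (\<integral>\<^sup>+x. F (\<lambda>k\<in>I. c * x k) \<partial>PiM I (\<lambda>_. lborel))"
  using I F
proof (induction I arbitrary: F rule: finite_induct)
  case empty
  then show ?case by (simp add: PiM_empty nn_integral_count_space_finite restrict_def)
next
  case (insert i I)
  interpret product_sigma_finite "\<lambda>_. lborel::real measure" by standard
  interpret pI: finite_product_sigma_finite "\<lambda>_. lborel::real measure" I by standard fact
  note Fm[measurable] = insert.prems
  define G where "G = (\<lambda>x. \<integral>\<^sup>+y. F (x(i := c * y)) \<partial>lborel)"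
  have Gm[measurable]: "G \<in> borel_measurable (PiM I (\<lambda>_. lborel))"
    unfolding G_def
  proof (rule lborel.borel_measurable_nn_integral)
    have "(\<lambda>(x, y). x(i := c * y)) \<in> measurable (PiM I (\<lambda>_. lborel) \<Otimes>\<^sub>M lborel) (PiM (insert i I) (\<lambda>_. lborel))"
    proof (rule measurable_PiM_single')
      fix k assume "k \<in> insert i I"
      then show "(\<lambda>\<omega>. (case \<omega> of (x, y) \<Rightarrow> x(i := c * y)) k) \<in> measurable (PiM I (\<lambda>_. lborel) \<Otimes>\<^sub>M lborel) lborel"
        by (cases "k = i") (auto simp: split_beta')
    next
      show "(\<lambda>(x, y). x(i := c * y)) \<in> space (PiM I (\<lambda>_. lborel) \<Otimes>\<^sub>M lborel) \<rightarrow> (\<Pi>\<^sub>E i\<in>insert i I. space lborel)"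
        using insert(2) by (auto simp: space_pair_measure space_PiM PiE_def extensional_def)
    qed
    from measurable_compose[OF this Fm]
    show "case_prod (\<lambda>x y. F (x(i := c * y))) \<in> borel_measurable (PiM I (\<lambda>_. lborel) \<Otimes>\<^sub>M lborel)"
      by (simp add: split_beta')
  qed
  have "(\<integral>\<^sup>+x. F x \<partial>PiM (insert i I) (\<lambda>_. lborel)) = (\<integral>\<^sup>+x. (\<integral>\<^sup>+y. F (x(i := y)) \<partial>lborel) \<partial>PiM I (\<lambda>_. lborel))"
    by (rule product_nn_integral_insert[OF insert(1,2) Fm])
  also have "\<dots> = (\<integral>\<^sup>+x. ennreal c * G x \<partial>PiM I (\<lambda>_. lborel))"
  proof (rule nn_integral_cong)
    fix x :: "_ \<Rightarrow> real" assume x: "x \<in> space (PiM I (\<lambda>_. lborel))"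
    have "(\<lambda>y. F (x(i := y))) \<in> borel_measurable lborel"
      using measurable_comp[OF measurable_component_update[OF x insert(2)] Fm] by (simp add: comp_def)
    then have "(\<lambda>y. F (x(i := y))) \<in> borel_measurable borel" by simp
    from nn_integral_real_affine[OF this, of c 0] c
    show "(\<integral>\<^sup>+y. F (x(i := y)) \<partial>lborel) = ennreal c * G x" unfolding G_def by simp
  qed
  also have "\<dots> = ennreal c * (\<integral>\<^sup>+x. G x \<partial>PiM I (\<lambda>_. lborel))"
    by (rule nn_integral_cmult) simp
  also have "\<dots> = ennreal c * (ennreal (c ^ card I) * (\<integral>\<^sup>+x. G (\<lambda>k\<in>I. c * x k) \<partial>PiM I (\<lambda>_. lborel)))"
    using insert.IH[OF Gm] by (simp only:)
  also have "(\<integral>\<^sup>+x. G (\<lambda>k\<in>I. c * x k) \<partial>PiM I (\<lambda>_. lborel))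
      = (\<integral>\<^sup>+x. F (\<lambda>k\<in>insert i I. c * x k) \<partial>PiM (insert i I) (\<lambda>_. lborel))"
  proof -
    have m2: "(\<lambda>x. F (\<lambda>k\<in>insert i I. c * x k)) \<in> borel_measurable (PiM (insert i I) (\<lambda>_. lborel))"
      by measurable
    have "(\<integral>\<^sup>+x. F (\<lambda>k\<in>insert i I. c * x k) \<partial>PiM (insert i I) (\<lambda>_. lborel))
       = (\<integral>\<^sup>+x. (\<integral>\<^sup>+y. F (\<lambda>k\<in>insert i I. c * (x(i := y)) k) \<partial>lborel) \<partial>PiM I (\<lambda>_. lborel))"
      by (rule product_nn_integral_insert[OF insert(1,2) m2])
    also have "\<dots> = (\<integral>\<^sup>+x. G (\<lambda>k\<in>I. c * x k) \<partial>PiM I (\<lambda>_. lborel))"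
    proof (rule nn_integral_cong)
      fix x :: "_ \<Rightarrow> real"
      have "(\<lambda>k\<in>insert i I. c * (x(i := y)) k) = (\<lambda>k\<in>I. c * x k)(i := c * y)" for y
        using insert(2) by (auto simp: fun_eq_iff restrict_def)
      then show "(\<integral>\<^sup>+y. F (\<lambda>k\<in>insert i I. c * (x(i := y)) k) \<partial>lborel) = G (\<lambda>k\<in>I. c * x k)"
        unfolding G_def by simp
    qed
    finally show ?thesis by simp
  qed
  finally have eq: "(\<integral>\<^sup>+x. F x \<partial>PiM (insert i I) (\<lambda>_. lborel)) = ennreal c * (ennreal (c ^ card I) *
     (\<integral>\<^sup>+x. F (\<lambda>k\<in>insert i I. c * x k) \<partial>PiM (insert i I) (\<lambda>_. lborel)))" .
  have "ennreal c * ennreal (c ^ card I) = ennreal (c ^ card (insert i I))"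
    using c insert(1,2) by (simp add: ennreal_mult[symmetric])
  then show ?case unfolding eq by (metis mult.assoc)
qed

lemma PiM_density_lborel:
  fixes f :: "'i \<Rightarrow> real \<Rightarrow> ennreal"
  assumes I: "finite I"
    and fm: "\<And>i. i \<in> I \<Longrightarrow> f i \<in> borel_measurable borel"
    and fp: "\<And>i. i \<in> I \<Longrightarrow> prob_space (density lborel (f i))"
  shows "PiM I (\<lambda>i. density lborel (f i)) = density (PiM I (\<lambda>_. lborel)) (\<lambda>x. \<Prod>i\<in>I. f i (x i))"
proof -
  define M where "M i = (if i \<in> I then density lborel (f i) else lborel)" for i
  have sf: "sigma_finite_measure (M i)" for i
  proof (cases "i \<in> I")
    case True
    then interpret prob_space "M i" using fp unfolding M_def by simp
    show ?thesis by unfold_locales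
  next
    case False
    then show ?thesis unfolding M_def by (simp add: sigma_finite_lborel)
  qed
  interpret product_sigma_finite M unfolding product_sigma_finite_def using sf by blast
  interpret L: product_sigma_finite "\<lambda>_. lborel::real measure" by standard
  have setsM: "sets (M i) = sets borel" for i unfolding M_def by simp
  have "PiM I (\<lambda>i. density lborel (f i)) = PiM I M"
    by (rule PiM_cong) (auto simp: M_def)
  also have "\<dots> = density (PiM I (\<lambda>_. lborel)) (\<lambda>x. \<Prod>i\<in>I. f i (x i))"
  proof (rule PiM_eqI[symmetric, OF I])
    show "sets (density (PiM I (\<lambda>_. lborel)) (\<lambda>x. \<Prod>i\<in>I. f i (x i))) = sets (PiM I M)"
      by (simp add: setsM cong: sets_PiM_cong)
  next
    fix A assume A: "\<And>i. i \<in> I \<Longrightarrow> A i \<in> sets (M i)"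
    then have A': "\<And>i. i \<in> I \<Longrightarrow> A i \<in> sets borel" using setsM by auto
    have pm: "(\<lambda>x. \<Prod>i\<in>I. f i (x i)) \<in> borel_measurable (PiM I (\<lambda>_. lborel))"
      using fm by (intro borel_measurable_prod_ennreal) (auto intro!: measurable_compose[OF measurable_component_singleton])
    have "emeasure (density (PiM I (\<lambda>_. lborel)) (\<lambda>x. \<Prod>i\<in>I. f i (x i))) (Pi\<^sub>E I A)
        = (\<integral>\<^sup>+x. (\<Prod>i\<in>I. f i (x i)) * indicator (Pi\<^sub>E I A) x \<partial>PiM I (\<lambda>_. lborel))"
      using A' I by (subst emeasure_density[OF pm]) (auto intro!: sets_PiM_I_finite)
    also have "\<dots> = (\<integral>\<^sup>+x. (\<Prod>i\<in>I. f i (x i) * indicator (A i) (x i)) \<partial>PiM I (\<lambda>_. lborel))"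
    proof (rule nn_integral_cong)
      fix x assume "x \<in> space (PiM I (\<lambda>_. lborel::real measure))"
      then have "x \<in> extensional I" by (simp add: space_PiM PiE_def)
      then have "indicator (Pi\<^sub>E I A) x = (\<Prod>i\<in>I. indicator (A i) (x i) :: ennreal)"
        using I by (auto simp: indicator_def PiE_def Pi_def prod.neutral_const)
      then show "(\<Prod>i\<in>I. f i (x i)) * indicator (Pi\<^sub>E I A) x = (\<Prod>i\<in>I. f i (x i) * indicator (A i) (x i))"
        by (simp add: prod.distrib)
    qed
    also have "\<dots> = (\<Prod>i\<in>I. \<integral>\<^sup>+y. f i y * indicator (A i) y \<partial>lborel)"
      using fm A' I by (intro L.product_nn_integral_prod) auto
    also have "\<dots> = (\<Prod>i\<in>I. emeasure (M i) (A i))"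
      using fm A' by (intro prod.cong refl) (simp add: M_def emeasure_density)
    finally show "emeasure (density (PiM I (\<lambda>_. lborel)) (\<lambda>x. \<Prod>i\<in>I. f i (x i))) (Pi\<^sub>E I A) = (\<Prod>i\<in>I. emeasure (M i) (A i))" .
  qed
  finally show ?thesis .
qed

definition clamp01 :: "real \<Rightarrow> real" where "clamp01 a = max 0 (min a 1)"

definition betad :: "nat \<Rightarrow> real \<Rightarrow> ennreal" where
  "betad N x = ennreal (real N * x ^ (N - 1)) * indicator {0<..1} x"

lemma betad_measurable[measurable]: "betad N \<in> borel_measurable borel"
  unfolding betad_def by measurable

lemma betad_cdf:
  assumes N: "N \<ge> 1"
  shows "(\<integral>\<^sup>+x. betad N x * indicator {..a} x \<partial>lborel) = ennreal (clamp01 a ^ N)"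
proof (cases "a \<le> 0")
  case True
  have z: "betad N x * indicator {..a} x = 0" for x
    using True unfolding betad_def by (auto simp: indicator_def)
  have "(\<integral>\<^sup>+x. betad N x * indicator {..a} x \<partial>lborel) = (\<integral>\<^sup>+x. 0 \<partial>(lborel::real measure))"
    by (rule nn_integral_cong) (rule z)
  then show ?thesis using True N by (simp add: clamp01_def)
next
  case False
  define b where "b = min a 1"
  have b: "0 < b" "b \<le> 1" using False unfolding b_def by auto
  have "(\<integral>\<^sup>+x. betad N x * indicator {..a} x \<partial>lborel)
      = (\<integral>\<^sup>+x. ennreal (real N * x ^ (N - 1)) * indicator {0..b} x \<partial>lborel)"
  proof (rule nn_integral_cong_AE)
    show "AE x in lborel. betad N x * indicator {..a} x = ennreal (real N * x ^ (N - 1)) * indicator {0..b} x"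
      using AE_lborel_singleton[of "0::real"]
      by eventually_elim (auto simp: betad_def indicator_def b_def)
  qed
  also have "\<dots> = ennreal (b ^ N - 0 ^ N)"
  proof (rule nn_integral_FTC_Icc)
    show "(\<lambda>x. real N * x ^ (N - 1)) \<in> borel_measurable borel" by measurable
    fix x :: real
    show "DERIV (\<lambda>x. x ^ N) x :> real N * x ^ (N - 1)" by (rule derivative_eq_intros refl | simp)+
    show "0 \<le> real N * x ^ (N - 1)" if "x \<in> {0..b}" using that by simp
  qed (use b in auto)
  finally show ?thesis using N b by (simp add: clamp01_def b_def)
qed

lemma PiE_Collect_UNIV: "{f \<in> PiE I (\<lambda>_. UNIV). \<forall>i\<in>I. f i \<in> A i} = PiE I A"
  by (auto simp: PiE_iff extensional_def)

lemma PiM_borel_atMost_gen: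
  fixes P :: "nat set"
  assumes P: "finite P"
  shows "sets (PiM P (\<lambda>_. borel::real measure)) =
         sigma_sets (PiE P (\<lambda>_. UNIV)) {PiE P (\<lambda>k. {..a k}) | a. True}"
proof -
  let ?E = "\<lambda>_::nat. range (\<lambda>a::real. {..a})"
  let ?Q = "{{f \<in> PiE P (\<lambda>_. UNIV). \<forall>i\<in>j. f i \<in> A i} | A (j::nat set). j \<in> {P} \<and> A \<in> Pi j ?E}"
  have "sets (PiM P (\<lambda>_. borel::real measure)) = sets (PiM P (\<lambda>_. sigma UNIV (?E 0)))"
    by (simp add: borel_eq_atMost[symmetric])
  also have "\<dots> = sets (sigma (PiE P (\<lambda>_. UNIV)) ?Q)"
  proof (rule sets_PiM_sigma)
    fix i
    show "\<exists>S\<subseteq>?E i. countable S \<and> UNIV = \<Union>S"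
    proof (intro exI conjI)
      show "range (\<lambda>j::nat. {..real j}) \<subseteq> ?E i" by auto
      show "countable (range (\<lambda>j::nat. {..real j}))" by simp
      show "UNIV = \<Union>(range (\<lambda>j::nat. {..real j}))"
        by (auto intro: real_arch_simple)
    qed
  qed (use P in auto)
  also have "?Q = {PiE P (\<lambda>k. {..a k}) | a. True}"
  proof (intro equalityI subsetI)
    fix X assume "X \<in> ?Q"
    then have "\<exists>A j. X = {f \<in> PiE P (\<lambda>_. UNIV). \<forall>i\<in>j. f i \<in> A i} \<and> j \<in> {P} \<and> A \<in> Pi j ?E"
      by (simp only: mem_Collect_eq)
    then obtain A j where A: "X = {f \<in> PiE P (\<lambda>_. UNIV). \<forall>i\<in>j. f i \<in> A i}" "j \<in> {P}" "A \<in> Pi j ?E"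
      by (elim exE conjE)
    have jP: "j = P" using A(2) by simp
    have "\<forall>i\<in>P. \<exists>a. A i = {..a}"
    proof
      fix i assume i: "i \<in> P"
      have "A i \<in> range (\<lambda>a::real. {..a})" using A(3) jP i unfolding Pi_def by blast
      then obtain a where "A i = {..a}" by (rule rangeE)
      then show "\<exists>a. A i = {..a}" by blast
    qed
    from bchoice[OF this] obtain a where a: "\<forall>i\<in>P. A i = {..a i}" by blast
    have "X = PiE P A" unfolding A(1) jP by (rule PiE_Collect_UNIV)
    also have "\<dots> = PiE P (\<lambda>k. {..a k})" using a by (intro PiE_cong) simp
    finally show "X \<in> {PiE P (\<lambda>k. {..a k}) | a. True}" by (intro CollectI exI[of _ a]) simp
  next
    fix X assume "X \<in> {PiE P (\<lambda>k. {..a k}) | a::nat\<Rightarrow>real. True}"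
    then have "\<exists>a. X = PiE P (\<lambda>k. {..a k::real}) \<and> True" by (simp only: mem_Collect_eq)
    then obtain a where X: "X = PiE P (\<lambda>k. {..a k::real})" by blast
    have e: "PiE P (\<lambda>k. {..a k}) = {f \<in> PiE P (\<lambda>_. UNIV). \<forall>i\<in>P. f i \<in> (\<lambda>k. {..a k}) i}"
      by (rule PiE_Collect_UNIV[symmetric])
    have "(\<lambda>k. {..a k::real}) \<in> Pi P ?E" by auto
    then show "X \<in> ?Q" unfolding X e by (intro CollectI exI[of _ "\<lambda>k. {..a k}"] exI[of _ P]) simp
  qed
  finally have "sets (PiM P (\<lambda>_. borel::real measure)) = sets (sigma (PiE P (\<lambda>_. UNIV)) {PiE P (\<lambda>k. {..a k}) | a. True})" .
  moreover have "{PiE P (\<lambda>k. {..a k::real}) | a. True} \<subseteq> Pow (PiE P (\<lambda>_. UNIV))" by (auto simp: PiE_iff)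
  ultimately show ?thesis by simp
qed

lemma prob_betad:
  assumes N: "N \<ge> 1"
  shows "prob_space (density lborel (betad N))"
proof (rule prob_spaceI)
  have "emeasure (density lborel (betad N)) (space (density lborel (betad N)))
      = (\<integral>\<^sup>+x. betad N x * indicator {..1} x \<partial>lborel)"
    by (subst emeasure_density) (auto intro!: nn_integral_cong simp: betad_def indicator_def)
  also have "\<dots> = 1" using betad_cdf[OF N, of 1] by (simp add: clamp01_def)
  finally show "emeasure (density lborel (betad N)) (space (density lborel (betad N))) = 1" .
qed

lemma finite_betad: "finite_measure (density lborel (betad N))"
proof (cases "N = 0")
  case True
  then have "density lborel (betad N) = density lborel (\<lambda>_. 0)"
    by (intro density_cong) (auto simp: betad_def)
  then show ?thesis by (simp add: finite_measureI emeasure_density)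
next
  case False
  then interpret prob_space "density lborel (betad N)" by (intro prob_betad) simp
  show ?thesis by unfold_locales
qed

lemma emeasure_U_atMost:
  "emeasure (uniform_measure lborel {0..1::real}) {..b} = ennreal (clamp01 b)"
proof -
  have "emeasure (uniform_measure lborel {0..1::real}) {..b} = emeasure lborel ({0..1} \<inter> {..b}) / emeasure lborel {0..1::real}"
    by (rule emeasure_uniform_measure) auto
  also have "{0..1} \<inter> {..b} = {0..min b 1::real}" by auto
  finally show ?thesis
    by (cases "b \<ge> 0") (auto simp: clamp01_def divide_ennreal_def min.commute)
qed

lemma cell_count_alt: "cell_count n X k = card {i\<in>{1..n}. X i = k}"
  by (simp add: cell_count_def)

lemma maxima_law:
  fixes n :: nat and X :: "nat \<Rightarrow> nat" and P :: "nat set"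
  assumes P: "finite P" and XP: "\<forall>i\<in>{1..n}. X i \<in> P" and NP: "\<forall>k\<in>P. cell_count n X k > 0"
  shows "distr (unif_cube n) (PiM P (\<lambda>_. borel)) (\<lambda>u. \<lambda>k\<in>P. Max (u ` {i\<in>{1..n}. X i = k}))
       = density (PiM P (\<lambda>_. lborel)) (\<lambda>w. \<Prod>k\<in>P. betad (cell_count n X k) (w k))"
proof -
  define C where "C k = {i\<in>{1..n}. X i = k}" for k
  define N where "N k = cell_count n X k" for k
  define m where "m = (\<lambda>u::nat\<Rightarrow>real. \<lambda>k\<in>P. Max (u ` C k))"
  define U where "U = uniform_measure lborel {0..1::real}"
  have NC: "N k = card (C k)" for k unfolding N_def C_def cell_count_def ..
  have Cfin: "finite (C k)" for k unfolding C_def by simp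
  have Cne: "C k \<noteq> {}" if "k \<in> P" for k using NP that Cfin unfolding N_def[symmetric] NC by auto
  have N1: "N k \<ge> 1" if "k \<in> P" for k using NP that unfolding N_def by auto
  have UC: "unif_cube n = PiM {1..n} (\<lambda>_. U)" unfolding unif_cube_def U_def ..
  interpret U: prob_space U unfolding U_def by (rule prob_space_uniform_measure) auto
  interpret UP: product_prob_space "\<lambda>_. U" by standard
  have rhs: "density (PiM P (\<lambda>_. lborel)) (\<lambda>w. \<Prod>k\<in>P. betad (N k) (w k)) = PiM P (\<lambda>k. density lborel (betad (N k)))"
    by (rule PiM_density_lborel[symmetric, OF P]) (auto intro: prob_betad N1)
  have mm: "m \<in> measurable (unif_cube n) (PiM P (\<lambda>_. borel))"
    unfolding m_def UC
  proof (rule measurable_restrict)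
    fix k assume "k \<in> P"
    have "(\<lambda>u. Max ((\<lambda>i. u i) ` C k)) \<in> borel_measurable (PiM {1..n} (\<lambda>_. U))"
    proof (rule borel_measurable_Max[OF Cfin])
      fix i assume "i \<in> C k"
      then have "(\<lambda>x. x i) \<in> measurable (PiM {1..n} (\<lambda>_. U)) U" by (intro measurable_component_singleton) (auto simp: C_def)
      moreover have "sets U = sets borel" unfolding U_def by simp
      ultimately show "(\<lambda>x. x i) \<in> borel_measurable (PiM {1..n} (\<lambda>_. U))" using measurable_cong_sets by blast
    qed
    then show "(\<lambda>u. Max (u ` C k)) \<in> measurable (PiM {1..n} (\<lambda>_. U)) borel" by simp
  qed
  have "distr (unif_cube n) (PiM P (\<lambda>_. borel)) m = density (PiM P (\<lambda>_. lborel)) (\<lambda>w. \<Prod>k\<in>P. betad (N k) (w k))"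
  proof (rule measure_eqI_generator_eq[OF _ _ _ _ _ _ _])
    show "Int_stable {PiE P (\<lambda>k. {..a k}) | a::nat \<Rightarrow> real. True}"
    proof (rule Int_stableI)
      fix A B assume "A \<in> {PiE P (\<lambda>k. {..a k}) | a::nat \<Rightarrow> real. True}" "B \<in> {PiE P (\<lambda>k. {..a k}) | a::nat \<Rightarrow> real. True}"
      then obtain a b where "A = PiE P (\<lambda>k. {..a k})" "B = PiE P (\<lambda>k. {..b k})" by blast
      then have "A \<inter> B = PiE P (\<lambda>k. {..min (a k) (b k)})" by (simp add: PiE_Int)
      then show "A \<inter> B \<in> {PiE P (\<lambda>k. {..a k}) | a::nat \<Rightarrow> real. True}"
        by (intro CollectI exI[of _ "\<lambda>k. min (a k) (b k)"]) simp
    qed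
    show "{PiE P (\<lambda>k. {..a k}) | a::nat \<Rightarrow> real. True} \<subseteq> Pow (PiE P (\<lambda>_. UNIV))"
      by (auto intro: PiE_mono)
    show "sets (distr (unif_cube n) (PiM P (\<lambda>_. borel)) m) = sigma_sets (PiE P (\<lambda>_. UNIV)) {PiE P (\<lambda>k. {..a k}) | a::nat \<Rightarrow> real. True}"
      using PiM_borel_atMost_gen[OF P] by simp
    show "sets (density (PiM P (\<lambda>_. lborel)) (\<lambda>w. \<Prod>k\<in>P. betad (N k) (w k))) = sigma_sets (PiE P (\<lambda>_. UNIV)) {PiE P (\<lambda>k. {..a k}) | a::nat \<Rightarrow> real. True}"
      using PiM_borel_atMost_gen[OF P] by (simp cong: sets_PiM_cong)
    show "range (\<lambda>j::nat. PiE P (\<lambda>k. {..real j})) \<subseteq> {PiE P (\<lambda>k. {..a k}) | a::nat \<Rightarrow> real. True}"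
    proof (rule subsetI)
      fix Y assume "Y \<in> range (\<lambda>j::nat. PiE P (\<lambda>k. {..real j}))"
      then obtain j where "Y = PiE P (\<lambda>k. {..real j})" by blast
      then show "Y \<in> {PiE P (\<lambda>k. {..a k}) | a::nat \<Rightarrow> real. True}"
        by (intro CollectI exI[of _ "\<lambda>k. real j"]) simp
    qed
    show "(\<Union>j. PiE P (\<lambda>k. {..real j})) = PiE P (\<lambda>_. UNIV)"
    proof (intro equalityI subsetI)
      fix f assume "f \<in> (\<Union>j. PiE P (\<lambda>k. {..real j}))"
      then show "f \<in> PiE P (\<lambda>_. UNIV)" using PiE_mono[of P "\<lambda>k. {..real j}" "\<lambda>_. UNIV" for j] by blast
    next
      fix f :: "nat \<Rightarrow> real" assume f: "f \<in> PiE P (\<lambda>_. UNIV)"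
      obtain j :: nat where j: "(\<Sum>k\<in>P. \<bar>f k\<bar>) \<le> real j" using real_arch_simple by blast
      have "f k \<le> real j" if "k \<in> P" for k
      proof -
        have "f k \<le> \<bar>f k\<bar>" by simp
        also have "\<bar>f k\<bar> \<le> (\<Sum>k\<in>P. \<bar>f k\<bar>)" using P that by (intro member_le_sum) auto
        finally show ?thesis using j by simp
      qed
      then have "f \<in> PiE P (\<lambda>k. {..real j})" using f by (auto simp: PiE_iff)
      then show "f \<in> (\<Union>j. PiE P (\<lambda>k. {..real j}))" by blast
    qed
    show "emeasure (distr (unif_cube n) (PiM P (\<lambda>_. borel)) m) (PiE P (\<lambda>k. {..real j})) \<noteq> \<infinity>" for j
    proof -
      interpret pc: prob_space "unif_cube n" unfolding UC by (rule prob_space_PiM) (rule U.prob_space_axioms)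
      interpret pd: prob_space "distr (unif_cube n) (PiM P (\<lambda>_. borel)) m" by (rule pc.prob_space_distr[OF mm])
      show ?thesis by simp
    qed
  next
    fix Y assume "Y \<in> {PiE P (\<lambda>k. {..a k}) | a::nat \<Rightarrow> real. True}"
    then obtain a where Y: "Y = PiE P (\<lambda>k. {..a k})" by blast
    have Ys: "Y \<in> sets (PiM P (\<lambda>_. borel))" unfolding Y using P by (intro sets_PiM_I_finite) auto
    have pre: "m -` Y \<inter> space (unif_cube n) = PiE {1..n} (\<lambda>i. {..a (X i)})"
    proof (intro equalityI subsetI)
      fix u assume u: "u \<in> m -` Y \<inter> space (unif_cube n)"
      then have us: "u \<in> PiE {1..n} (\<lambda>_. UNIV)" unfolding UC by (simp add: space_PiM U_def)
      have "\<forall>k\<in>P. Max (u ` C k) \<le> a k" using u unfolding Y m_def by (simp add: restrict_PiE_iff Pi_iff)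
      then have "\<forall>k\<in>P. \<forall>i\<in>C k. u i \<le> a k" using Cfin Cne by simp
      then have "\<forall>i\<in>{1..n}. u i \<le> a (X i)" using XP unfolding C_def by blast
      then show "u \<in> PiE {1..n} (\<lambda>i. {..a (X i)})" using us by (auto simp: PiE_iff)
    next
      fix u assume u: "u \<in> PiE {1..n} (\<lambda>i. {..a (X i)})"
      then have us: "u \<in> space (unif_cube n)" unfolding UC by (auto simp: space_PiM U_def PiE_iff)
      have "\<forall>i\<in>{1..n}. u i \<le> a (X i)" using u by (auto simp: PiE_iff)
      then have "\<forall>k\<in>P. \<forall>i\<in>C k. u i \<le> a k" unfolding C_def by auto
      then have "\<forall>k\<in>P. Max (u ` C k) \<le> a k" using Cfin Cne by simp
      then have "m u \<in> Y" unfolding Y m_def by (simp add: restrict_PiE_iff)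
      then show "u \<in> m -` Y \<inter> space (unif_cube n)" using us by simp
    qed
    have "emeasure (distr (unif_cube n) (PiM P (\<lambda>_. borel)) m) Y = emeasure (unif_cube n) (PiE {1..n} (\<lambda>i. {..a (X i)}))"
      by (subst emeasure_distr[OF mm Ys]) (simp add: pre)
    also have "\<dots> = (\<Prod>i\<in>{1..n}. emeasure U {..a (X i)})"
      unfolding UC by (rule UP.emeasure_PiM) (auto simp: U_def)
    also have "\<dots> = (\<Prod>i\<in>{1..n}. ennreal (clamp01 (a (X i))))"
      unfolding U_def by (simp add: emeasure_U_atMost)
    also have "\<dots> = (\<Prod>k\<in>P. \<Prod>i\<in>{i\<in>{1..n}. X i = k}. ennreal (clamp01 (a (X i))))"
      by (rule prod.group[symmetric]) (use P XP in auto)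
    also have "\<dots> = (\<Prod>k\<in>P. ennreal (clamp01 (a k) ^ N k))"
    proof (rule prod.cong[OF refl])
      fix k assume "k \<in> P"
      have "(\<Prod>i\<in>{i\<in>{1..n}. X i = k}. ennreal (clamp01 (a (X i)))) = (\<Prod>i\<in>C k. ennreal (clamp01 (a k)))"
        unfolding C_def by (rule prod.cong) auto
      also have "\<dots> = ennreal (clamp01 (a k)) ^ N k" by (simp add: NC)
      also have "\<dots> = ennreal (clamp01 (a k) ^ N k)" by (rule ennreal_power) (simp add: clamp01_def)
      finally show "(\<Prod>i\<in>{i\<in>{1..n}. X i = k}. ennreal (clamp01 (a (X i)))) = ennreal (clamp01 (a k) ^ N k)" .
    qed
    also have "\<dots> = (\<Prod>k\<in>P. emeasure (density lborel (betad (N k))) {..a k})"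
      by (intro prod.cong refl) (simp add: emeasure_density betad_cdf[OF N1])
    also have "\<dots> = emeasure (PiM P (\<lambda>k. density lborel (betad (N k)))) Y"
    proof -
      interpret BP: product_sigma_finite "\<lambda>k. density lborel (betad (N k))"
        unfolding product_sigma_finite_def
        using finite_betad by (auto intro: finite_measure.axioms(1))
      show ?thesis unfolding Y by (rule BP.emeasure_PiM[symmetric, OF P]) simp
    qed
    also have "\<dots> = emeasure (density (PiM P (\<lambda>_. lborel)) (\<lambda>w. \<Prod>k\<in>P. betad (N k) (w k))) Y"
      by (simp add: rhs)
    finally show "emeasure (distr (unif_cube n) (PiM P (\<lambda>_. borel)) m) Y = emeasure (density (PiM P (\<lambda>_. lborel)) (\<lambda>w. \<Prod>k\<in>P. betad (N k) (w k))) Y" .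
  qed
  then show ?thesis unfolding m_def C_def N_def .
qed

lemma gd_nat:
  assumes N: "N \<ge> 1"
  shows "gamma_density (real N) x = (if x > 0 then x ^ (N - 1) * exp (- x) / fact (N - 1) else 0)"
proof (cases "x > 0")
  case True
  obtain m where m: "N = Suc m" using N by (cases N) auto
  have "real N - 1 = real m" using m by simp
  then have p: "x powr (real N - 1) = x ^ m" using True by (simp only: powr_realpow)
  have "real N = 1 + of_nat m" using m by simp
  then have g: "Gamma (real N) = fact m" by (simp only: Gamma_fact)
  have "gamma_density (real N) x = x powr (real N - 1) * exp (- x) / Gamma (real N)"
    unfolding gamma_density_def using True by (simp only: if_True)
  also have "\<dots> = x ^ m * exp (- x) / fact m" by (simp only: p g)
  finally show ?thesis using True m by simp
qed (simp add: gamma_density_def)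

lemma gamma_nat_measurable[measurable]: "gamma_density a \<in> borel_measurable borel"
  unfolding gamma_density_def by measurable

lemma erlang_integral:
  "(\<integral>\<^sup>+s. ennreal (if s > 0 then s ^ m * exp (- s) else 0) \<partial>lborel) = ennreal (fact m)"
proof -
  interpret prob_space "density lborel (erlang_density m 1)" by (rule prob_space_erlang_density) simp
  have "1 = emeasure (density lborel (erlang_density m 1)) UNIV"
    using emeasure_space_1 by simp
  also have "\<dots> = (\<integral>\<^sup>+s. ennreal (erlang_density m 1 s) \<partial>lborel)"
    by (simp add: emeasure_density)
  also have "\<dots> = (\<integral>\<^sup>+s. ennreal (1 / fact m) * ennreal (if s > 0 then s ^ m * exp (- s) else 0) \<partial>lborel)"
  proof (rule nn_integral_cong_AE)
    show "AE s in lborel. ennreal (erlang_density m 1 s) = ennreal (1 / fact m) * ennreal (if s > 0 then s ^ m * exp (- s) else 0)"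
      using AE_lborel_singleton[of "0::real"]
      by eventually_elim (auto simp: erlang_density_def ennreal_mult[symmetric])
  qed
  also have "\<dots> = ennreal (1 / fact m) * (\<integral>\<^sup>+s. ennreal (if s > 0 then s ^ m * exp (- s) else 0) \<partial>lborel)"
    by (rule nn_integral_cmult) measurable
  finally have "1 = ennreal (1 / fact m) * (\<integral>\<^sup>+s. ennreal (if s > 0 then s ^ m * exp (- s) else 0) \<partial>lborel)" .
  then have "ennreal (fact m) * 1 = ennreal (fact m) * ennreal (1 / fact m) * (\<integral>\<^sup>+s. ennreal (if s > 0 then s ^ m * exp (- s) else 0) \<partial>lborel)"
    by (simp add: mult.assoc)
  also have "ennreal (fact m) * ennreal (1 / fact m) = 1"
    by (simp add: ennreal_mult[symmetric])
  finally show ?thesis by simp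
qed

definition fdir :: "nat set \<Rightarrow> (nat \<Rightarrow> nat) \<Rightarrow> (nat \<Rightarrow> real) \<Rightarrow> real" where
  "fdir P N w = (if (\<forall>k\<in>P. 0 < w k) \<and> sum w P < 1 then \<Prod>k\<in>P. w k ^ (N k - 1) else 0)"

lemma fdir_nonneg: "fdir P N w \<ge> 0"
  unfolding fdir_def by (auto intro!: prod_nonneg)

lemma fdir_measurable:
  assumes "finite P"
  shows "(\<lambda>w. ennreal (fdir P N w)) \<in> borel_measurable (PiM P (\<lambda>_. lborel))"
  unfolding fdir_def using assms by measurable

lemma dir_chain:
  fixes P :: "nat set" and N :: "nat \<Rightarrow> nat" and h :: "(nat \<Rightarrow> real) \<Rightarrow> ennreal"
  assumes P: "finite P" and N1: "\<forall>k\<in>P. N k \<ge> 1"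
    and hm[measurable]: "h \<in> borel_measurable (PiM P (\<lambda>_. lborel))"
  shows "(\<integral>\<^sup>+x. (\<integral>\<^sup>+y. ennreal (gamma_density 1 y) * (\<Prod>k\<in>P. ennreal (gamma_density (real (N k)) (x k)))
              * h (\<lambda>k\<in>P. x k / (y + sum x P)) \<partial>lborel) \<partial>PiM P (\<lambda>_. lborel))
       = ennreal (fact (sum N P) / (\<Prod>k\<in>P. fact (N k - 1))) * (\<integral>\<^sup>+w. ennreal (fdir P N w) * h w \<partial>PiM P (\<lambda>_. lborel))"
proof -
  let ?L = "PiM P (\<lambda>_. lborel::real measure)"
  define D :: real where "D = (\<Prod>k\<in>P. fact (N k - 1))"
  define Pw where "Pw x = (\<Prod>k\<in>P. x k ^ (N k - 1))" for x :: "nat \<Rightarrow> real"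
  define R where "R = (\<integral>\<^sup>+w. ennreal (fdir P N w) * h w \<partial>?L)"
  define \<Phi> where "\<Phi> x s = ennreal (if sum x P < s \<and> (\<forall>k\<in>P. 0 < x k) then Pw x * exp (- s) / D else 0)
      * h (\<lambda>k\<in>P. x k / s)" for x :: "nat \<Rightarrow> real" and s :: real
  have Dpos: "D > 0" unfolding D_def by (intro prod_pos) auto
  interpret L: product_sigma_finite "\<lambda>_. lborel::real measure" by standard
  interpret PL: finite_product_sigma_finite "\<lambda>_. lborel::real measure" P by standard fact
  interpret pair_sigma_finite ?L lborel by standard
  have \<Phi>m: "case_prod \<Phi> \<in> borel_measurable (?L \<Otimes>\<^sub>M lborel)"
    unfolding \<Phi>_def Pw_def using P by measurable
  have step1: "(\<integral>\<^sup>+y. ennreal (gamma_density 1 y) * (\<Prod>k\<in>P. ennreal (gamma_density (real (N k)) (x k)))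
              * h (\<lambda>k\<in>P. x k / (y + sum x P)) \<partial>lborel) = (\<integral>\<^sup>+s. \<Phi> x s \<partial>lborel)"
    if x: "x \<in> space ?L" for x
  proof -
    have gnn: "gamma_density (real (N k)) t \<ge> 0" if "k \<in> P" for k t
      using N1 that by (simp add: gd_nat)
    have gx: "(\<Prod>k\<in>P. ennreal (gamma_density (real (N k)) (x k)))
        = ennreal (if \<forall>k\<in>P. 0 < x k then Pw x * exp (- sum x P) / D else 0)"
    proof -
      have "(\<Prod>k\<in>P. ennreal (gamma_density (real (N k)) (x k))) = ennreal (\<Prod>k\<in>P. gamma_density (real (N k)) (x k))"
        using gnn by (intro prod_ennreal) auto
      also have "(\<Prod>k\<in>P. gamma_density (real (N k)) (x k)) = (if \<forall>k\<in>P. 0 < x k then Pw x * exp (- sum x P) / D else 0)"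
      proof (cases "\<forall>k\<in>P. 0 < x k")
        case True
        have "(\<Prod>k\<in>P. gamma_density (real (N k)) (x k)) = (\<Prod>k\<in>P. x k ^ (N k - 1) * exp (- x k) / fact (N k - 1))"
          using True N1 by (intro prod.cong) (auto simp: gd_nat)
        also have "\<dots> = Pw x * (\<Prod>k\<in>P. exp (- x k)) / D"
          unfolding Pw_def D_def by (simp add: prod.distrib prod_dividef)
        also have "(\<Prod>k\<in>P. exp (- x k)) = exp (- sum x P)"
          using exp_sum[OF P, of "\<lambda>k. - x k"] by (simp add: sum_negf)
        finally show ?thesis using True by simp
      next
        case False
        then obtain k where k: "k \<in> P" "x k \<le> 0" by (auto simp: not_less)
        then have "gamma_density (real (N k)) (x k) = 0" using N1 by (simp add: gd_nat)
        then have "(\<Prod>k\<in>P. gamma_density (real (N k)) (x k)) = 0" using k P by (intro prod_zero) auto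
        then show ?thesis using False by (simp only: if_False)
      qed
      finally show ?thesis .
    qed
    have g1: "gamma_density 1 y = (if y > 0 then exp (- y) else 0)" for y
      using gd_nat[of 1 y] by simp
    define G where "G y = ennreal (if y > 0 then exp (- y) else 0)
        * ennreal (if \<forall>k\<in>P. 0 < x k then Pw x * exp (- sum x P) / D else 0)
        * h (\<lambda>k\<in>P. x k / (y + sum x P))" for y
    have Gm: "G \<in> borel_measurable borel" unfolding G_def using P by measurable
    have "(\<integral>\<^sup>+y. ennreal (gamma_density 1 y) * (\<Prod>k\<in>P. ennreal (gamma_density (real (N k)) (x k)))
              * h (\<lambda>k\<in>P. x k / (y + sum x P)) \<partial>lborel) = (\<integral>\<^sup>+y. G y \<partial>lborel)"
      unfolding G_def gx g1 ..
    also have "\<dots> = (\<integral>\<^sup>+s. G (- sum x P + 1 * s) \<partial>lborel)"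
      using nn_integral_real_affine[OF Gm, of 1 "- sum x P"] by simp
    also have "\<dots> = (\<integral>\<^sup>+s. \<Phi> x s \<partial>lborel)"
    proof (rule nn_integral_cong)
      fix s :: real
      have e: "- sum x P + 1 * s + sum x P = s" by simp
      show "G (- sum x P + 1 * s) = \<Phi> x s"
      proof (cases "sum x P < s \<and> (\<forall>k\<in>P. 0 < x k)")
        case True
        have ee: "exp (sum x P - s) * exp (- sum x P) = exp (- s)" by (simp flip: exp_add)
        have E: "exp (sum x P - s) * Pw x * exp (- sum x P) / D = Pw x * exp (- s) / D"
          using ee by (metis mult.commute mult.left_commute)
        have "Pw x \<ge> 0" unfolding Pw_def using True by (auto intro!: prod_nonneg)
        then show ?thesis using True Dpos unfolding G_def \<Phi>_def e
          by (simp add: ennreal_mult[symmetric] mult.assoc[symmetric] E)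
      next
        case False
        then show ?thesis unfolding G_def \<Phi>_def by auto
      qed
    qed
    finally show ?thesis .
  qed
  have step3: "(\<integral>\<^sup>+x. \<Phi> x s \<partial>?L) = ennreal (if s > 0 then s ^ sum N P * exp (- s) else 0) * ennreal (1 / D) * R" for s
  proof (cases "s > 0")
    case False
    have "(\<integral>\<^sup>+x. \<Phi> x s \<partial>?L) = (\<integral>\<^sup>+x. 0 \<partial>?L)"
    proof (rule nn_integral_cong)
      fix x assume "x \<in> space ?L"
      have nc: "\<not> (sum x P < s \<and> (\<forall>k\<in>P. 0 < x k))"
      proof
        assume a: "sum x P < s \<and> (\<forall>k\<in>P. 0 < x k)"
        then have "sum x P \<ge> 0" by (intro sum_nonneg) (auto intro: less_imp_le)
        then show False using a False by simp
      qed
      show "\<Phi> x s = 0" unfolding \<Phi>_def by (subst if_not_P[OF nc]) simp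
    qed
    then show ?thesis using False by simp
  next
    case True
    define S1 where "S1 = (\<Prod>k\<in>P. s ^ (N k - 1))"
    have S1nn: "S1 \<ge> 0" unfolding S1_def using True by (auto intro!: prod_nonneg)
    have \<Phi>sm: "(\<lambda>x. \<Phi> x s) \<in> borel_measurable ?L" unfolding \<Phi>_def Pw_def using P by measurable
    have "(\<integral>\<^sup>+x. \<Phi> x s \<partial>?L) = ennreal (s ^ card P) * (\<integral>\<^sup>+w. \<Phi> (\<lambda>k\<in>P. s * w k) s \<partial>?L)"
      by (rule PiM_lborel_scale[OF True P \<Phi>sm])
    also have "(\<integral>\<^sup>+w. \<Phi> (\<lambda>k\<in>P. s * w k) s \<partial>?L) = (\<integral>\<^sup>+w. ennreal (S1 * exp (- s) / D) * (ennreal (fdir P N w) * h w) \<partial>?L)"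
    proof (rule nn_integral_cong)
      fix w assume w: "w \<in> space ?L"
      have ext: "(\<lambda>k\<in>P. (\<lambda>k\<in>P. s * w k) k / s) = w"
        using w True by (auto simp: space_PiM PiE_def extensional_def fun_eq_iff)
      have sm: "sum (\<lambda>k\<in>P. s * w k) P = s * sum w P"
        by (simp add: sum_distrib_left)
      have c1: "(sum (\<lambda>k\<in>P. s * w k) P < s) = (sum w P < 1)" unfolding sm using True by simp
      have c2: "(\<forall>k\<in>P. 0 < (\<lambda>k\<in>P. s * w k) k) = (\<forall>k\<in>P. 0 < w k)"
        using True by (simp add: zero_less_mult_iff)
      have pw: "Pw (\<lambda>k\<in>P. s * w k) = S1 * (\<Prod>k\<in>P. w k ^ (N k - 1))"
        unfolding Pw_def S1_def by (simp add: power_mult_distrib prod.distrib)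
      show "\<Phi> (\<lambda>k\<in>P. s * w k) s = ennreal (S1 * exp (- s) / D) * (ennreal (fdir P N w) * h w)"
      proof (cases "(\<forall>k\<in>P. 0 < w k) \<and> sum w P < 1")
        case True
        define W where "W = (\<Prod>k\<in>P. w k ^ (N k - 1))"
        have W: "W \<ge> 0" unfolding W_def using True by (auto intro!: prod_nonneg)
        have "ennreal (S1 * W * exp (- s) / D) = ennreal (S1 * exp (- s) / D) * ennreal W"
          using S1nn W Dpos by (subst ennreal_mult[symmetric]) (auto simp: field_simps)
        then show ?thesis unfolding \<Phi>_def c1 c2 pw ext fdir_def W_def[symmetric] using True
          by (simp add: mult.assoc)
      next
        case False
        then have nc1: "\<not> (sum w P < 1 \<and> (\<forall>k\<in>P. 0 < w k))" by blast
        show ?thesis unfolding \<Phi>_def c1 c2 pw ext fdir_def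
          by (simp only: if_not_P[OF nc1] if_not_P[OF False]) simp
      qed
    qed
    also have "\<dots> = ennreal (S1 * exp (- s) / D) * R"
      unfolding R_def by (rule nn_integral_cmult) (use P fdir_measurable[OF P] in measurable)
    also have "ennreal (s ^ card P) * (ennreal (S1 * exp (- s) / D) * R)
        = ennreal (s ^ sum N P * exp (- s)) * ennreal (1 / D) * R"
    proof -
      have "s ^ card P * S1 = (\<Prod>k\<in>P. s * s ^ (N k - 1))"
        unfolding S1_def by (simp add: prod.distrib)
      also have "\<dots> = (\<Prod>k\<in>P. s ^ N k)"
        using N1 by (intro prod.cong refl) (metis Suc_diff_1 less_le_trans power_Suc zero_less_one)
      also have "\<dots> = s ^ sum N P" by (simp add: power_sum)
      finally have "s ^ card P * S1 = s ^ sum N P" .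
      then have "s ^ card P * (S1 * exp (- s) / D) = s ^ sum N P * exp (- s) * (1 / D)"
        by (simp add: field_simps)
      then show ?thesis using True S1nn Dpos
        by (simp add: ennreal_mult[symmetric] mult.assoc[symmetric])
    qed
    finally show ?thesis using True by simp
  qed
  have "(\<integral>\<^sup>+x. (\<integral>\<^sup>+y. ennreal (gamma_density 1 y) * (\<Prod>k\<in>P. ennreal (gamma_density (real (N k)) (x k)))
              * h (\<lambda>k\<in>P. x k / (y + sum x P)) \<partial>lborel) \<partial>?L) = (\<integral>\<^sup>+x. (\<integral>\<^sup>+s. \<Phi> x s \<partial>lborel) \<partial>?L)"
    by (rule nn_integral_cong) (rule step1)
  also have "\<dots> = (\<integral>\<^sup>+s. (\<integral>\<^sup>+x. \<Phi> x s \<partial>?L) \<partial>lborel)"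
    by (rule Fubini'[OF \<Phi>m, symmetric])
  also have "\<dots> = (\<integral>\<^sup>+s. ennreal (if s > 0 then s ^ sum N P * exp (- s) else 0) * (ennreal (1 / D) * R) \<partial>lborel)"
    by (simp only: step3 mult.assoc)
  also have "\<dots> = (\<integral>\<^sup>+s. ennreal (if s > 0 then s ^ sum N P * exp (- s) else 0) \<partial>lborel) * (ennreal (1 / D) * R)"
    by (rule nn_integral_multc) measurable
  also have "\<dots> = ennreal (fact (sum N P)) * (ennreal (1 / D) * R)"
    by (simp only: erlang_integral)
  also have "\<dots> = ennreal (fact (sum N P) / D) * R"
    using Dpos by (simp add: ennreal_mult[symmetric] mult.assoc[symmetric])
  finally show ?thesis unfolding R_def D_def .
qed

lemma prob_gamma_nat:
  assumes N: "N \<ge> 1"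
  shows "prob_space (density lborel (\<lambda>x. ennreal (gamma_density (real N) x)))"
proof -
  have "density lborel (\<lambda>x. ennreal (gamma_density (real N) x)) = density lborel (erlang_density (N - 1) 1)"
  proof (rule density_cong)
    show "AE x in lborel. ennreal (gamma_density (real N) x) = ennreal (erlang_density (N - 1) 1 x)"
      using AE_lborel_singleton[of "0::real"]
      by eventually_elim (auto simp: gd_nat[OF N] erlang_density_def)
  qed auto
  then show ?thesis using prob_space_erlang_density[of 1 "N - 1"] by simp
qed

lemma fdir_measurable_real:
  assumes "finite P"
  shows "fdir P N \<in> borel_measurable (PiM P (\<lambda>_. lborel))"
  unfolding fdir_def using assms by measurable

lemma dirichlet_law:
  fixes K :: nat and N :: "nat \<Rightarrow> nat"
  defines "P \<equiv> {k\<in>{1..K}. 0 < N k}"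
  shows "distr (dirichlet {0..K} (\<lambda>j. if j = 0 then 1 else real (N j))) (PiM P (\<lambda>_. borel)) (\<lambda>z. restrict z P)
       = density (PiM P (\<lambda>_. lborel)) (\<lambda>w. ennreal (fact (sum N P) / (\<Prod>k\<in>P. fact (N k - 1)) * fdir P N w))"
proof -
  define \<alpha> where "\<alpha> = (\<lambda>j. if j = 0 then 1 else real (N j))"
  define P0 where "P0 = {j\<in>{0..K}. 0 < \<alpha> j}"
  define c0 :: real where "c0 = fact (sum N P) / (\<Prod>k\<in>P. fact (N k - 1))"
  have finP: "finite P" unfolding P_def by simp
  have P0P: "P0 = insert 0 P" unfolding P0_def P_def \<alpha>_def by auto
  have P0n: "0 \<notin> P" unfolding P_def by simp
  have PK: "P \<subseteq> {0..K}" unfolding P_def by auto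
  have N1: "\<forall>k\<in>P. N k \<ge> 1" unfolding P_def by auto
  have c0pos: "c0 > 0" unfolding c0_def by (intro divide_pos_pos prod_pos) auto
  define GP where "GP = PiM P0 (\<lambda>j. density lborel (\<lambda>x. ennreal (gamma_density (\<alpha> j) x)))"
  define \<phi> where "\<phi> = (\<lambda>g::nat\<Rightarrow>real. \<lambda>j\<in>{0..K}. if 0 < \<alpha> j then g j / sum g P0 else 0)"
  have Dir: "dirichlet {0..K} \<alpha> = distr GP (PiM {0..K} (\<lambda>_. borel)) \<phi>"
    unfolding dirichlet_def GP_def \<phi>_def P0_def ..
  have \<alpha>P0: "\<alpha> j = real (if j = 0 then 1 else N j)" for j unfolding \<alpha>_def by simp
  have gprob: "prob_space (density lborel (\<lambda>x. ennreal (gamma_density (\<alpha> j) x)))" if "j \<in> P0" for j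
    using that N1 unfolding P0P \<alpha>P0 by (intro prob_gamma_nat) auto
  have GPd: "GP = density (PiM P0 (\<lambda>_. lborel)) (\<lambda>g. \<Prod>j\<in>P0. ennreal (gamma_density (\<alpha> j) (g j)))"
    unfolding GP_def by (rule PiM_density_lborel) (auto simp: P0P finP gprob)
  have sGP: "sets GP = sets (PiM P0 (\<lambda>_. borel))" unfolding GP_def by (simp cong: sets_PiM_cong)
  have \<phi>m: "\<phi> \<in> measurable GP (PiM {0..K} (\<lambda>_. borel))"
    unfolding \<phi>_def
  proof (rule measurable_restrict)
    fix j assume j: "j \<in> {0..K}"
    show "(\<lambda>g. if 0 < \<alpha> j then g j / sum g P0 else 0) \<in> borel_measurable GP"
    proof (cases "0 < \<alpha> j")
      case True
      then have "j \<in> P0" using j unfolding P0_def by simp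
      then have "(\<lambda>g. g j / sum g P0) \<in> borel_measurable (PiM P0 (\<lambda>_. borel::real measure))"
        using finP unfolding P0P
        by (intro borel_measurable_divide borel_measurable_sum measurable_component_singleton) auto
      then have "(\<lambda>g. g j / sum g P0) \<in> borel_measurable GP"
        by (subst measurable_cong_sets[OF sGP refl])
      then show ?thesis using True by simp
    qed simp
  qed
  have \<rho>m: "(\<lambda>z. restrict z P) \<in> measurable (PiM {0..K} (\<lambda>_. borel::real measure)) (PiM P (\<lambda>_. borel))"
    using PK by (rule measurable_restrict_subset)
  show ?thesis
    unfolding \<alpha>_def[symmetric] c0_def[symmetric] Dir
  proof (rule measure_eqI)
    show "sets (distr (distr GP (PiM {0..K} (\<lambda>_. borel)) \<phi>) (PiM P (\<lambda>_. borel)) (\<lambda>z. restrict z P))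
        = sets (density (PiM P (\<lambda>_. lborel)) (\<lambda>w. ennreal (c0 * fdir P N w)))"
      by (simp cong: sets_PiM_cong)
  next
    fix B assume "B \<in> sets (distr (distr GP (PiM {0..K} (\<lambda>_. borel)) \<phi>) (PiM P (\<lambda>_. borel)) (\<lambda>z. restrict z P))"
    then have B: "B \<in> sets (PiM P (\<lambda>_. borel))" by simp
    show "emeasure (distr (distr GP (PiM {0..K} (\<lambda>_. borel)) \<phi>) (PiM P (\<lambda>_. borel)) (\<lambda>z. restrict z P)) B
        = emeasure (density (PiM P (\<lambda>_. lborel)) (\<lambda>w. ennreal (c0 * fdir P N w))) B"
    proof -
      let ?F = "\<lambda>g. indicator B (restrict (\<phi> g) P) :: ennreal"
      have cm: "(\<lambda>g. restrict (\<phi> g) P) \<in> measurable GP (PiM P (\<lambda>_. borel))"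
        using \<rho>m \<phi>m by (rule measurable_compose[rotated])
      have cm': "(\<lambda>g. restrict (\<phi> g) P) \<in> measurable (PiM P0 (\<lambda>_. lborel)) (PiM P (\<lambda>_. borel))"
        using cm sGP by (simp cong: measurable_cong_sets sets_PiM_cong)
      have Fm: "?F \<in> borel_measurable (PiM P0 (\<lambda>_. lborel))"
        using measurable_compose[OF cm' borel_measurable_indicator[OF B]] by (simp add: comp_def)
      have Bl: "B \<in> sets (PiM P (\<lambda>_. lborel))" using B by (simp cong: sets_PiM_cong)
      have "emeasure (distr (distr GP (PiM {0..K} (\<lambda>_. borel)) \<phi>) (PiM P (\<lambda>_. borel)) (\<lambda>z. restrict z P)) B
          = emeasure (distr GP (PiM P (\<lambda>_. borel)) (\<lambda>g. restrict (\<phi> g) P)) B"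
        by (subst distr_distr[OF \<rho>m \<phi>m]) (simp add: comp_def)
      also have "\<dots> = emeasure GP ((\<lambda>g. restrict (\<phi> g) P) -` B \<inter> space GP)"
        by (rule emeasure_distr[OF cm B])
      also have "\<dots> = (\<integral>\<^sup>+g. ?F g \<partial>GP)"
        by (subst nn_integral_indicator[symmetric])
           (auto intro!: measurable_sets[OF cm B] nn_integral_cong simp: indicator_def)
      also have "\<dots> = (\<integral>\<^sup>+g. (\<Prod>j\<in>P0. ennreal (gamma_density (\<alpha> j) (g j))) * ?F g \<partial>PiM P0 (\<lambda>_. lborel))"
        unfolding GPd
      proof (rule nn_integral_density[OF _ Fm])
        have "finite P0" unfolding P0P using finP by simp
        then show "(\<lambda>g. \<Prod>j\<in>P0. ennreal (gamma_density (\<alpha> j) (g j))) \<in> borel_measurable (PiM P0 (\<lambda>_. lborel))"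
        proof (intro borel_measurable_prod_ennreal)
          fix j assume j: "j \<in> P0"
          have "(\<lambda>x. ennreal (gamma_density (\<alpha> j) x)) \<in> borel_measurable lborel" by simp
          with measurable_component_singleton[OF j, of "\<lambda>_. lborel"]
          show "(\<lambda>g. ennreal (gamma_density (\<alpha> j) (g j))) \<in> borel_measurable (PiM P0 (\<lambda>_. lborel))"
            by (rule measurable_compose)
        qed
      qed
      also have "\<dots> = (\<integral>\<^sup>+x. (\<integral>\<^sup>+y. ennreal (gamma_density 1 y) * (\<Prod>k\<in>P. ennreal (gamma_density (real (N k)) (x k)))
              * indicator B (\<lambda>k\<in>P. x k / (y + sum x P)) \<partial>lborel) \<partial>PiM P (\<lambda>_. lborel))"
      proof -
        interpret L: product_sigma_finite "\<lambda>_. lborel::real measure" by standard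
        have PM0: "PiM P0 (\<lambda>_. lborel::real measure) = PiM (insert 0 P) (\<lambda>_. lborel)" by (simp add: P0P)
        have pm: "(\<lambda>g. \<Prod>j\<in>P0. ennreal (gamma_density (\<alpha> j) (g j))) \<in> borel_measurable (PiM P0 (\<lambda>_. lborel))"
        proof (intro borel_measurable_prod_ennreal)
          fix j assume j: "j \<in> P0"
          have "(\<lambda>x. ennreal (gamma_density (\<alpha> j) x)) \<in> borel_measurable lborel" by simp
          with measurable_component_singleton[OF j, of "\<lambda>_. lborel"]
          show "(\<lambda>g. ennreal (gamma_density (\<alpha> j) (g j))) \<in> borel_measurable (PiM P0 (\<lambda>_. lborel))"
            by (rule measurable_compose)
        qed
        have Gm: "(\<lambda>g. (\<Prod>j\<in>P0. ennreal (gamma_density (\<alpha> j) (g j))) * ?F g) \<in> borel_measurable (PiM (insert 0 P) (\<lambda>_. lborel))"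
          using borel_measurable_times_ennreal[OF pm Fm] unfolding PM0 .
        have "(\<integral>\<^sup>+g. (\<Prod>j\<in>P0. ennreal (gamma_density (\<alpha> j) (g j))) * ?F g \<partial>PiM P0 (\<lambda>_. lborel))
            = (\<integral>\<^sup>+x. (\<integral>\<^sup>+y. (\<Prod>j\<in>P0. ennreal (gamma_density (\<alpha> j) ((x(0 := y)) j))) * ?F (x(0 := y)) \<partial>lborel) \<partial>PiM P (\<lambda>_. lborel))"
          unfolding PM0 by (rule L.product_nn_integral_insert[OF finP P0n Gm])
        also have "\<dots> = (\<integral>\<^sup>+x. (\<integral>\<^sup>+y. ennreal (gamma_density 1 y) * (\<Prod>k\<in>P. ennreal (gamma_density (real (N k)) (x k)))
              * indicator B (\<lambda>k\<in>P. x k / (y + sum x P)) \<partial>lborel) \<partial>PiM P (\<lambda>_. lborel))"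
        proof (intro nn_integral_cong)
          fix x :: "nat \<Rightarrow> real" and y :: real
          have pr: "(\<Prod>j\<in>P0. ennreal (gamma_density (\<alpha> j) ((x(0 := y)) j)))
              = ennreal (gamma_density 1 y) * (\<Prod>k\<in>P. ennreal (gamma_density (real (N k)) (x k)))"
          proof -
            have "(\<Prod>j\<in>P0. ennreal (gamma_density (\<alpha> j) ((x(0 := y)) j)))
                = ennreal (gamma_density (\<alpha> 0) y) * (\<Prod>k\<in>P. ennreal (gamma_density (\<alpha> k) ((x(0 := y)) k)))"
              unfolding P0P by (simp add: prod.insert[OF finP P0n])
            also have "(\<Prod>k\<in>P. ennreal (gamma_density (\<alpha> k) ((x(0 := y)) k))) = (\<Prod>k\<in>P. ennreal (gamma_density (real (N k)) (x k)))"
              using P0n by (intro prod.cong refl) (auto simp: \<alpha>_def)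
            finally show ?thesis by (simp add: \<alpha>_def)
          qed
          have sm: "sum (x(0 := y)) P0 = y + sum x P"
            unfolding P0P using P0n finP by (simp add: sum.insert) (intro sum.cong refl, auto)
          have rs: "restrict (\<phi> (x(0 := y))) P = (\<lambda>k\<in>P. x k / (y + sum x P))"
          proof
            fix k
            show "restrict (\<phi> (x(0 := y))) P k = (\<lambda>k\<in>P. x k / (y + sum x P)) k"
            proof (cases "k \<in> P")
              case True
              then have "k \<in> {0..K}" "0 < \<alpha> k" "k \<noteq> 0" using PK P0n unfolding P_def \<alpha>_def by auto
              then show ?thesis using True unfolding \<phi>_def sm by simp
            qed simp
          qed
          show "(\<Prod>j\<in>P0. ennreal (gamma_density (\<alpha> j) ((x(0 := y)) j))) * ?F (x(0 := y))
              = ennreal (gamma_density 1 y) * (\<Prod>k\<in>P. ennreal (gamma_density (real (N k)) (x k))) * indicator B (\<lambda>k\<in>P. x k / (y + sum x P))"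
            unfolding pr rs ..
        qed
        finally show ?thesis .
      qed
      also have "\<dots> = ennreal c0 * (\<integral>\<^sup>+w. ennreal (fdir P N w) * indicator B w \<partial>PiM P (\<lambda>_. lborel))"
        unfolding c0_def by (rule dir_chain[OF finP N1]) (rule borel_measurable_indicator[OF Bl])
      also have "\<dots> = (\<integral>\<^sup>+w. ennreal c0 * (ennreal (fdir P N w) * indicator B w) \<partial>PiM P (\<lambda>_. lborel))"
      proof (rule nn_integral_cmult[symmetric])
        show "(\<lambda>w. ennreal (fdir P N w) * indicator B w) \<in> borel_measurable (PiM P (\<lambda>_. lborel))"
          using fdir_measurable[OF finP] borel_measurable_indicator[OF Bl] by (rule borel_measurable_times_ennreal)
      qed
      also have "\<dots> = (\<integral>\<^sup>+w. ennreal (c0 * fdir P N w) * indicator B w \<partial>PiM P (\<lambda>_. lborel))"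
        using c0pos fdir_nonneg by (intro nn_integral_cong) (simp add: ennreal_mult mult.assoc)
      also have "\<dots> = emeasure (density (PiM P (\<lambda>_. lborel)) (\<lambda>w. ennreal (c0 * fdir P N w))) B"
      proof (rule emeasure_density[symmetric, OF _ Bl])
        have "(\<lambda>w. c0 * fdir P N w) \<in> borel_measurable (PiM P (\<lambda>_. lborel))"
          using fdir_measurable_real[OF finP] by (rule borel_measurable_times[OF borel_measurable_const])
        then show "(\<lambda>w. ennreal (c0 * fdir P N w)) \<in> borel_measurable (PiM P (\<lambda>_. lborel))" by simp
      qed
      finally show ?thesis .
    qed
  qed
qed

lemma dirichlet_prob_good:
  fixes K :: nat and N :: "nat \<Rightarrow> nat"
  defines "P \<equiv> {k\<in>{1..K}. 0 < N k}"
  shows "prob_space (dirichlet {0..K} (\<lambda>j. if j = 0 then 1 else real (N j)))"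
    and "AE z in dirichlet {0..K} (\<lambda>j. if j = 0 then 1 else real (N j)).
           (\<forall>k\<in>{1..K}. 0 \<le> z k) \<and> (\<Sum>k\<in>{1..K}. z k) < 1 \<and> (\<forall>k\<in>{1..K}. k \<notin> P \<longrightarrow> z k = 0)"
    and "sets (dirichlet {0..K} (\<lambda>j. if j = 0 then 1 else real (N j))) = sets (PiM {0..K} (\<lambda>_. borel))"
proof -
  define \<alpha> where "\<alpha> = (\<lambda>j. if j = 0 then 1 else real (N j))"
  define P0 where "P0 = {j\<in>{0..K}. 0 < \<alpha> j}"
  define c0 :: real where "c0 = fact (sum N P) / (\<Prod>k\<in>P. fact (N k - 1))"
  have finP: "finite P" unfolding P_def by simp
  have P0P: "P0 = insert 0 P" unfolding P0_def P_def \<alpha>_def by auto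
  have P0n: "0 \<notin> P" unfolding P_def by simp
  have PK: "P \<subseteq> {0..K}" unfolding P_def by auto
  have N1: "\<forall>k\<in>P. N k \<ge> 1" unfolding P_def by auto
  have c0pos: "c0 > 0" unfolding c0_def by (intro divide_pos_pos prod_pos) auto
  define GP where "GP = PiM P0 (\<lambda>j. density lborel (\<lambda>x. ennreal (gamma_density (\<alpha> j) x)))"
  define \<phi> where "\<phi> = (\<lambda>g::nat\<Rightarrow>real. \<lambda>j\<in>{0..K}. if 0 < \<alpha> j then g j / sum g P0 else 0)"
  have Dir: "dirichlet {0..K} \<alpha> = distr GP (PiM {0..K} (\<lambda>_. borel)) \<phi>"
    unfolding dirichlet_def GP_def \<phi>_def P0_def ..
  have \<alpha>P0: "\<alpha> j = real (if j = 0 then 1 else N j)" for j unfolding \<alpha>_def by simp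
  have gprob: "prob_space (density lborel (\<lambda>x. ennreal (gamma_density (\<alpha> j) x)))" if "j \<in> P0" for j
    using that N1 unfolding P0P \<alpha>P0 by (intro prob_gamma_nat) auto
  have GPd: "GP = density (PiM P0 (\<lambda>_. lborel)) (\<lambda>g. \<Prod>j\<in>P0. ennreal (gamma_density (\<alpha> j) (g j)))"
    unfolding GP_def by (rule PiM_density_lborel) (auto simp: P0P finP gprob)
  have sGP: "sets GP = sets (PiM P0 (\<lambda>_. borel))" unfolding GP_def by (simp cong: sets_PiM_cong)
  have \<phi>m: "\<phi> \<in> measurable GP (PiM {0..K} (\<lambda>_. borel))"
    unfolding \<phi>_def
  proof (rule measurable_restrict)
    fix j assume j: "j \<in> {0..K}"
    show "(\<lambda>g. if 0 < \<alpha> j then g j / sum g P0 else 0) \<in> borel_measurable GP"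
    proof (cases "0 < \<alpha> j")
      case True
      then have "j \<in> P0" using j unfolding P0_def by simp
      then have "(\<lambda>g. g j / sum g P0) \<in> borel_measurable (PiM P0 (\<lambda>_. borel::real measure))"
        using finP unfolding P0P
        by (intro borel_measurable_divide borel_measurable_sum measurable_component_singleton) auto
      then have "(\<lambda>g. g j / sum g P0) \<in> borel_measurable GP"
        by (subst measurable_cong_sets[OF sGP refl])
      then show ?thesis using True by simp
    qed simp
  qed
  have P0fin: "finite P0" unfolding P0P using finP by simp
  interpret GPp: prob_space GP unfolding GP_def by (rule prob_space_PiM) (rule gprob)
  show "prob_space (dirichlet {0..K} (\<lambda>j. if j = 0 then 1 else real (N j)))"
    unfolding \<alpha>_def[symmetric] Dir by (rule GPp.prob_space_distr[OF \<phi>m])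
  show "sets (dirichlet {0..K} (\<lambda>j. if j = 0 then 1 else real (N j))) = sets (PiM {0..K} (\<lambda>_. borel))"
    unfolding \<alpha>_def[symmetric] Dir by simp
  let ?good = "\<lambda>z::nat\<Rightarrow>real. (\<forall>k\<in>{1..K}. 0 \<le> z k) \<and> (\<Sum>k\<in>{1..K}. z k) < 1 \<and> (\<forall>k\<in>{1..K}. k \<notin> P \<longrightarrow> z k = 0)"
  have goodm: "Measurable.pred (PiM {0..K} (\<lambda>_. borel::real measure)) ?good"
    by measurable
  have "AE g in GP. ?good (\<phi> g)"
  proof -
    have pm: "(\<lambda>g. \<Prod>j\<in>P0. ennreal (gamma_density (\<alpha> j) (g j))) \<in> borel_measurable (PiM P0 (\<lambda>_. lborel))"
    proof (intro borel_measurable_prod_ennreal)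
      fix j assume j: "j \<in> P0"
      have "(\<lambda>x. ennreal (gamma_density (\<alpha> j) x)) \<in> borel_measurable lborel" by simp
      with measurable_component_singleton[OF j, of "\<lambda>_. lborel"]
      show "(\<lambda>g. ennreal (gamma_density (\<alpha> j) (g j))) \<in> borel_measurable (PiM P0 (\<lambda>_. lborel))"
        by (rule measurable_compose)
    qed
    have "AE g in PiM P0 (\<lambda>_. lborel). 0 < (\<Prod>j\<in>P0. ennreal (gamma_density (\<alpha> j) (g j))) \<longrightarrow> ?good (\<phi> g)"
    proof (rule AE_I2, rule impI)
      fix g :: "nat \<Rightarrow> real" assume pos: "0 < (\<Prod>j\<in>P0. ennreal (gamma_density (\<alpha> j) (g j)))"
      have gpos: "g j > 0" if "j \<in> P0" for j
      proof (rule ccontr)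
        assume "\<not> g j > 0"
        then have "gamma_density (\<alpha> j) (g j) = 0" by (simp add: gamma_density_def)
        then have z: "(\<Prod>j\<in>P0. ennreal (gamma_density (\<alpha> j) (g j))) = 0"
          using that P0fin by (intro prod_zero bexI[of _ j]) auto
        show False using pos unfolding z by simp
      qed
      define S where "S = sum g P0"
      have S: "S = g 0 + sum g P" unfolding S_def P0P using finP P0n by simp
      have sP: "sum g P \<ge> 0" using gpos unfolding P0P by (intro sum_nonneg) (auto intro: less_imp_le)
      have g0: "g 0 > 0" using gpos unfolding P0P by simp
      have Spos: "S > 0" using S sP g0 by simp
      have \<phi>k: "\<phi> g k = (if k \<in> P then g k / S else 0)" if "k \<in> {1..K}" for k
        using that unfolding \<phi>_def S_def P0_def P_def \<alpha>_def by auto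
      have a: "\<forall>k\<in>{1..K}. 0 \<le> \<phi> g k"
        using gpos Spos \<phi>k unfolding P0P by (auto intro: less_imp_le)
      have "(\<Sum>k\<in>{1..K}. \<phi> g k) = (\<Sum>k\<in>{1..K}. if k \<in> P then g k / S else 0)"
        using \<phi>k by (intro sum.cong) auto
      also have "\<dots> = (\<Sum>k\<in>P. g k / S)"
      proof -
        have "{1..K} \<inter> P = P" unfolding P_def by auto
        then show ?thesis using sum.inter_restrict[of "{1..K}" "\<lambda>k. g k / S" P] by simp
      qed
      also have "\<dots> = sum g P / S" by (simp add: sum_divide_distrib)
      also have "\<dots> < 1" using S g0 Spos by (simp add: divide_less_eq)
      finally have b: "(\<Sum>k\<in>{1..K}. \<phi> g k) < 1" .
      have c: "\<forall>k\<in>{1..K}. k \<notin> P \<longrightarrow> \<phi> g k = 0" using \<phi>k by simp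
      show "?good (\<phi> g)" using a b c by blast
    qed
    then have "AE g in density (PiM P0 (\<lambda>_. lborel)) (\<lambda>g. \<Prod>j\<in>P0. ennreal (gamma_density (\<alpha> j) (g j))). ?good (\<phi> g)"
      by (subst AE_density[OF pm]) simp
    then show ?thesis unfolding GPd .
  qed
  then show "AE z in dirichlet {0..K} (\<lambda>j. if j = 0 then 1 else real (N j)). ?good z"
    unfolding \<alpha>_def[symmetric] Dir using goodm \<phi>m by (subst AE_distr_iff) auto
qed

lemma distr_uniform_measure:
  assumes f: "f \<in> measurable M N" and E: "E \<in> sets N"
  shows "distr (uniform_measure M {x\<in>space M. f x \<in> E}) N f = uniform_measure (distr M N f) E"
proof (rule measure_eqI)
  show "sets (distr (uniform_measure M {x\<in>space M. f x \<in> E}) N f) = sets (uniform_measure (distr M N f) E)"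
    by simp
next
  fix B assume "B \<in> sets (distr (uniform_measure M {x\<in>space M. f x \<in> E}) N f)"
  then have B: "B \<in> sets N" by simp
  have S: "{x\<in>space M. f x \<in> E} = f -` E \<inter> space M" by auto
  have Sm: "{x\<in>space M. f x \<in> E} \<in> sets M" unfolding S using f E by (rule measurable_sets)
  have fu: "f \<in> measurable (uniform_measure M {x\<in>space M. f x \<in> E}) N"
    using f by (simp cong: measurable_cong_sets)
  have "emeasure (distr (uniform_measure M {x\<in>space M. f x \<in> E}) N f) B
      = emeasure (uniform_measure M {x\<in>space M. f x \<in> E}) (f -` B \<inter> space M)"
    using emeasure_distr[OF fu B] by simp
  also have "\<dots> = emeasure M ({x\<in>space M. f x \<in> E} \<inter> (f -` B \<inter> space M)) / emeasure M {x\<in>space M. f x \<in> E}"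
    using Sm measurable_sets[OF f B] by (rule emeasure_uniform_measure)
  also have "{x\<in>space M. f x \<in> E} \<inter> (f -` B \<inter> space M) = f -` (E \<inter> B) \<inter> space M" by auto
  also have "emeasure M (f -` (E \<inter> B) \<inter> space M) = emeasure (distr M N f) (E \<inter> B)"
    using emeasure_distr[OF f sets.Int[OF E B]] by simp
  also have "emeasure M {x\<in>space M. f x \<in> E} = emeasure (distr M N f) E"
    unfolding S using emeasure_distr[OF f E] by simp
  also have "emeasure (distr M N f) (E \<inter> B) / emeasure (distr M N f) E = emeasure (uniform_measure (distr M N f) E) B"
    using E B by (subst emeasure_uniform_measure) auto
  finally show "emeasure (distr (uniform_measure M {x\<in>space M. f x \<in> E}) N f) B = emeasure (uniform_measure (distr M N f) E) B" .
qed

lemma Fp_ne_iff: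
  fixes w :: "nat \<Rightarrow> real"
  assumes K: "K \<ge> 1" and PK: "P \<subseteq> {1..K}" and w: "\<forall>k\<in>P. 0 \<le> w k"
  shows "Fp K P w \<noteq> {} \<longleftrightarrow> sum w P < 1"
proof
  assume "Fp K P w \<noteq> {}"
  then obtain \<theta> where th: "\<theta> \<in> param_simplex K" "\<forall>k\<in>P. w k < \<theta> k" unfolding Fp_def by blast
  have finP: "finite P" using PK finite_subset by blast
  show "sum w P < 1"
  proof (cases "P = {}")
    case True then show ?thesis by simp
  next
    case False
    have "sum w P < sum \<theta> P" using th(2) finP False by (intro sum_strict_mono) auto
    also have "\<dots> \<le> sum \<theta> {1..K}" using PK simplex_nonneg[OF th(1)] by (intro sum_mono2) auto
    also have "\<dots> = 1" by (rule simplex_sum[OF th(1)])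
    finally show ?thesis .
  qed
next
  assume s: "sum w P < 1"
  define \<theta> where "\<theta> k = (if k \<in> {1..K} then (if k \<in> P then w k else 0) + (1 - sum w P) / K else 0)" for k
  have pos: "(1 - sum w P) / K > 0" using s K by simp
  have "sum (\<lambda>k. if k \<in> P then w k else 0) {1..K} = sum w P"
  proof -
    have "{1..K} \<inter> P = P" using PK by auto
    then show ?thesis using sum.inter_restrict[of "{1..K}" w P] by simp
  qed
  then have "sum \<theta> {1..K} = 1" unfolding \<theta>_def using K by (simp add: sum.distrib)
  moreover have "\<forall>k\<in>{1..K}. \<theta> k \<ge> 0" unfolding \<theta>_def using w pos by (auto intro: add_nonneg_nonneg less_imp_le)
  moreover have "\<forall>k. k \<notin> {1..K} \<longrightarrow> \<theta> k = 0" unfolding \<theta>_def by simp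
  ultimately have "\<theta> \<in> param_simplex K" unfolding param_simplex_def by blast
  moreover have "\<forall>k\<in>P. w k < \<theta> k" unfolding \<theta>_def using PK pos by auto
  ultimately show "Fp K P w \<noteq> {}" unfolding Fp_def by blast
qed

lemma good_equiv:
  fixes z :: "nat \<Rightarrow> real" and G :: "(nat \<Rightarrow> real) set"
  assumes K: "K \<ge> 1" and PK: "P \<subseteq> {1..K}" and G: "open G"
    and z: "(\<forall>k\<in>{1..K}. 0 \<le> z k) \<and> (\<Sum>k\<in>{1..K}. z k) < 1 \<and> (\<forall>k\<in>{1..K}. k \<notin> P \<longrightarrow> z k = 0)"
  shows "(eN K z \<inter> G \<noteq> {}) = (Fp K P (restrict z P) \<inter> G \<noteq> {})"
proof
  assume "eN K z \<inter> G \<noteq> {}"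
  moreover have "(\<Sum>k\<in>{1..K}. max (z k) 0) < 1" using z by (simp add: max_absorb1)
  ultimately obtain \<theta> where "\<theta> \<in> param_simplex K \<inter> G" "\<forall>k\<in>{1..K}. z k < \<theta> k"
    using eN_hit_small[OF K G] by blast
  then have "\<theta> \<in> Fp K P (restrict z P) \<inter> G" unfolding Fp_def using PK by auto
  then show "Fp K P (restrict z P) \<inter> G \<noteq> {}" by blast
next
  assume "Fp K P (restrict z P) \<inter> G \<noteq> {}"
  then obtain \<theta> where th: "\<theta> \<in> param_simplex K" "\<theta> \<in> G" "\<forall>k\<in>P. z k < \<theta> k" unfolding Fp_def by auto
  have "\<forall>k\<in>{1..K}. z k \<le> \<theta> k"
  proof
    fix k assume k: "k \<in> {1..K}"
    show "z k \<le> \<theta> k"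
    proof (cases "k \<in> P")
      case True then show ?thesis using th(3) by (simp add: less_imp_le)
    next
      case False then show ?thesis using z k simplex_nonneg[OF th(1)] by simp
    qed
  qed
  then have "\<theta> \<in> eN K z \<inter> G" unfolding eN_def using th by auto
  then show "eN K z \<inter> G \<noteq> {}" by blast
qed

theorem theorem1:
  fixes K n :: nat and X :: "nat \<Rightarrow> nat"
  assumes "K \<ge> 2"
    and "\<forall>i\<in>{1..n}. X i \<in> {1..K}"
  shows "distr (uniform_measure (unif_cube n) {u \<in> space (unif_cube n). eX K n X u \<noteq> {}})
               effros (eX K n X)
       = distr (dirichlet {0..K} (\<lambda>j. if j = 0 then 1 else real (cell_count n X j)))
               effros (eN K)"
proof -
  define N where "N = cell_count n X"
  define P where "P = {k\<in>{1..K}. 0 < N k}"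
  define C where "C k = {i\<in>{1..n}. X i = k}" for k
  define m where "m = (\<lambda>u::nat\<Rightarrow>real. \<lambda>k\<in>P. Max (u ` C k))"
  define UC where "UC = unif_cube n"
  define PM where "PM = PiM P (\<lambda>_. borel::real measure)"
  define PL where "PL = PiM P (\<lambda>_. lborel::real measure)"
  define E where "E = {w \<in> space PM. Fp K P w \<noteq> {}}"
  define Dir where "Dir = dirichlet {0..K} (\<lambda>j. if j = 0 then 1 else real (cell_count n X j))"
  define c0 :: real where "c0 = fact (sum N P) / (\<Prod>k\<in>P. fact (N k - 1))"
  define \<delta> where "\<delta> = density PL (\<lambda>w. ennreal (c0 * fdir P N w))"
  define \<nu> where "\<nu> = density PL (\<lambda>w. \<Prod>k\<in>P. betad (N k) (w k))"
  have K1: "K \<ge> 1" using assms(1) by simp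
  have finP: "finite P" and PK: "P \<subseteq> {1..K}" unfolding P_def by auto
  have NC: "N k = card (C k)" for k unfolding N_def C_def cell_count_def ..
  have Cfin: "finite (C k)" for k unfolding C_def by simp
  have XP: "\<forall>i\<in>{1..n}. X i \<in> P"
  proof
    fix i assume i: "i \<in> {1..n}"
    then have "i \<in> C (X i)" unfolding C_def by simp
    then have "N (X i) > 0" unfolding NC using Cfin card_gt_0_iff by blast
    then show "X i \<in> P" unfolding P_def using assms(2) i by auto
  qed
  have NP: "\<forall>k\<in>P. cell_count n X k > 0" unfolding P_def N_def by auto
  have Cne: "C k \<noteq> {}" if "k \<in> P" for k using NP that Cfin unfolding N_def[symmetric] NC by auto
  have N1: "\<forall>k\<in>P. N k \<ge> 1" using NP unfolding N_def by (simp add: Suc_le_eq)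
  have sPL: "sets PL = sets PM" unfolding PL_def PM_def by (simp cong: sets_PiM_cong)
  have spPL: "space PL = space PM" unfolding PL_def PM_def by (simp add: space_PiM)
  have eXm: "eX K n X u = Fp K P (m u)" for u
  proof -
    have "(\<forall>i\<in>{1..n}. u i < \<theta> (X i)) \<longleftrightarrow> (\<forall>k\<in>P. Max (u ` C k) < \<theta> k)" for \<theta> :: "nat \<Rightarrow> real"
    proof -
      have "(\<forall>k\<in>P. Max (u ` C k) < \<theta> k) \<longleftrightarrow> (\<forall>k\<in>P. \<forall>i\<in>C k. u i < \<theta> k)"
        using Cfin Cne by simp
      also have "\<dots> \<longleftrightarrow> (\<forall>i\<in>{1..n}. u i < \<theta> (X i))" using XP unfolding C_def by blast
      finally show ?thesis by simp
    qed
    then show ?thesis unfolding eX_def Fp_def m_def by simp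
  qed
  have mm: "m \<in> measurable UC PM"
    unfolding m_def UC_def PM_def unif_cube_def
  proof (rule measurable_restrict)
    fix k assume "k \<in> P"
    have "(\<lambda>u. Max ((\<lambda>i. u i) ` C k)) \<in> borel_measurable (PiM {1..n} (\<lambda>_. uniform_measure lborel {0..1::real}))"
    proof (rule borel_measurable_Max[OF Cfin])
      fix i assume "i \<in> C k"
      then have "(\<lambda>x. x i) \<in> measurable (PiM {1..n} (\<lambda>_. uniform_measure lborel {0..1::real})) (uniform_measure lborel {0..1::real})"
        by (intro measurable_component_singleton) (auto simp: C_def)
      moreover have "sets (uniform_measure lborel {0..1::real}) = sets borel" by simp
      ultimately show "(\<lambda>x. x i) \<in> borel_measurable (PiM {1..n} (\<lambda>_. uniform_measure lborel {0..1::real}))"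
        using measurable_cong_sets by blast
    qed
    then show "(\<lambda>u. Max (u ` C k)) \<in> measurable (PiM {1..n} (\<lambda>_. uniform_measure lborel {0..1::real})) borel" by simp
  qed
  have law: "distr UC PM m = \<nu>"
    using maxima_law[OF finP XP NP] unfolding UC_def PM_def m_def C_def \<nu>_def PL_def N_def .
  have Em: "E \<in> sets PM"
  proof -
    have "E = {w \<in> space PM. \<exists>\<theta>\<in>param_simplex K. \<forall>k\<in>P. w k < \<theta> k}"
      unfolding E_def Fp_def by blast
    also have "\<dots> \<in> sets PM" unfolding PM_def by (rule hit_sets[OF finP order_refl])
    finally show ?thesis .
  qed
  have mspace: "m u \<in> space PM" for u unfolding m_def PM_def by (simp add: space_PiM)
  have Cond: "{u \<in> space UC. eX K n X u \<noteq> {}} = {u \<in> space UC. m u \<in> E}"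
    unfolding eXm E_def using mspace by auto
  have dcond: "distr (uniform_measure UC {u \<in> space UC. m u \<in> E}) PM m = uniform_measure \<nu> E"
    using distr_uniform_measure[OF mm Em] unfolding law .
  have dlaw: "distr Dir PM (\<lambda>z. restrict z P) = \<delta>"
    using dirichlet_law[of K "cell_count n X"]
    unfolding Dir_def PM_def \<delta>_def PL_def c0_def P_def N_def .
  have \<rho>m: "(\<lambda>z. restrict z P) \<in> measurable Dir PM"
  proof -
    have "(\<lambda>z. restrict z P) \<in> measurable (PiM {0..K} (\<lambda>_. borel::real measure)) PM"
      unfolding PM_def using PK by (intro measurable_restrict_subset) auto
    then show ?thesis using dirichlet_prob_good(3)[of K "cell_count n X"] unfolding Dir_def
      by (simp cong: measurable_cong_sets)
  qed
  have goodAE: "AE z in Dir. (\<forall>k\<in>{1..K}. 0 \<le> z k) \<and> (\<Sum>k\<in>{1..K}. z k) < 1 \<and> (\<forall>k\<in>{1..K}. k \<notin> P \<longrightarrow> z k = 0)"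
    unfolding Dir_def P_def N_def by (rule dirichlet_prob_good(2))
  interpret Dp: prob_space Dir unfolding Dir_def by (rule dirichlet_prob_good(1))
  have prob\<delta>: "prob_space \<delta>" unfolding dlaw[symmetric] by (rule Dp.prob_space_distr[OF \<rho>m])
  have unifeq: "uniform_measure \<nu> E = \<delta>"
  proof -
    have fdm: "(\<lambda>w. ennreal (fdir P N w)) \<in> borel_measurable PL" unfolding PL_def by (rule fdir_measurable[OF finP])
    have fdmr: "(\<lambda>w. ennreal (c0 * fdir P N w)) \<in> borel_measurable PL"
    proof -
      have "(\<lambda>w. c0 * fdir P N w) \<in> borel_measurable PL"
        unfolding PL_def using fdir_measurable_real[OF finP] by (rule borel_measurable_times[OF borel_measurable_const])
      then show ?thesis by simp
    qed
    have bm: "(\<lambda>w. \<Prod>k\<in>P. betad (N k) (w k)) \<in> borel_measurable PL"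
      unfolding PL_def
    proof (intro borel_measurable_prod_ennreal)
      fix k assume k: "k \<in> P"
      have "betad (N k) \<in> borel_measurable lborel" by simp
      with measurable_component_singleton[OF k, of "\<lambda>_. lborel"]
      show "(\<lambda>w. betad (N k) (w k)) \<in> borel_measurable (PiM P (\<lambda>_. lborel))"
        by (rule measurable_compose)
    qed
    have Em': "E \<in> sets PL" using Em sPL by simp
    define Nprod :: real where "Nprod = (\<Prod>k\<in>P. real (N k))"
    have Npos: "Nprod > 0" using N1 unfolding Nprod_def by (intro prod_pos) auto
    have c0pos: "c0 > 0" unfolding c0_def by (intro divide_pos_pos prod_pos) auto
    have If: "(\<integral>\<^sup>+w. ennreal (fdir P N w) \<partial>PL) = ennreal (1 / c0)"
    proof -
      have "1 = emeasure \<delta> (space \<delta>)" using prob_space.emeasure_space_1[OF prob\<delta>] by simp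
      also have "\<dots> = (\<integral>\<^sup>+w. ennreal (c0 * fdir P N w) * indicator (space PL) w \<partial>PL)"
        unfolding \<delta>_def by (subst space_density) (rule emeasure_density[OF fdmr], simp)
      also have "\<dots> = (\<integral>\<^sup>+w. ennreal c0 * ennreal (fdir P N w) \<partial>PL)"
        using c0pos fdir_nonneg by (intro nn_integral_cong) (simp add: ennreal_mult)
      also have "\<dots> = ennreal c0 * (\<integral>\<^sup>+w. ennreal (fdir P N w) \<partial>PL)"
        by (rule nn_integral_cmult[OF fdm])
      finally have e: "1 = ennreal c0 * (\<integral>\<^sup>+w. ennreal (fdir P N w) \<partial>PL)" .
      have "ennreal (1 / c0) = ennreal (1 / c0) * (ennreal c0 * (\<integral>\<^sup>+w. ennreal (fdir P N w) \<partial>PL))"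
        using e by simp
      also have "\<dots> = (ennreal (1 / c0) * ennreal c0) * (\<integral>\<^sup>+w. ennreal (fdir P N w) \<partial>PL)"
        by (simp add: mult.assoc)
      also have "ennreal (1 / c0) * ennreal c0 = 1"
        using c0pos by (simp add: ennreal_mult[symmetric])
      finally show ?thesis by simp
    qed
    have pw: "(\<Prod>k\<in>P. betad (N k) (w k)) * indicator E w = ennreal Nprod * ennreal (fdir P N w)"
      if w: "w \<in> space PL" for w
    proof (cases "\<forall>k\<in>P. 0 < w k \<and> w k \<le> 1")
      case True
      define W where "W = (\<Prod>k\<in>P. w k ^ (N k - 1))"
      have Wnn: "W \<ge> 0" unfolding W_def using True by (auto intro!: prod_nonneg)
      have "(\<Prod>k\<in>P. betad (N k) (w k)) = (\<Prod>k\<in>P. ennreal (real (N k) * w k ^ (N k - 1)))"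
        using True by (intro prod.cong refl) (auto simp: betad_def)
      also have "\<dots> = ennreal (\<Prod>k\<in>P. real (N k) * w k ^ (N k - 1))"
        using True by (intro prod_ennreal) auto
      also have "(\<Prod>k\<in>P. real (N k) * w k ^ (N k - 1)) = Nprod * W"
        unfolding Nprod_def W_def by (rule prod.distrib)
      finally have b: "(\<Prod>k\<in>P. betad (N k) (w k)) = ennreal (Nprod * W)" .
      have wE: "w \<in> E \<longleftrightarrow> sum w P < 1"
        unfolding E_def using w spPL Fp_ne_iff[OF K1 PK, of w] True by (auto intro: less_imp_le)
      show ?thesis
      proof (cases "sum w P < 1")
        case True2: True
        then have "fdir P N w = W" unfolding fdir_def W_def using True by auto
        then show ?thesis using b wE True2 Npos Wnn by (simp add: ennreal_mult)
      next
        case False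
        then have "fdir P N w = 0" unfolding fdir_def by auto
        then show ?thesis using wE False by simp
      qed
    next
      case False
      then obtain k where k: "k \<in> P" "\<not> (0 < w k \<and> w k \<le> 1)" by blast
      then have "betad (N k) (w k) = 0" by (auto simp: betad_def)
      then have z: "(\<Prod>k\<in>P. betad (N k) (w k)) = 0" using k finP by (intro prod_zero bexI[of _ k]) auto
      have "fdir P N w = 0"
      proof (cases "\<forall>k\<in>P. 0 < w k")
        case True
        then have "w k > 1" using k by auto
        moreover have "w k \<le> sum w P" using True k finP by (intro member_le_sum) (auto intro: less_imp_le)
        ultimately show ?thesis unfolding fdir_def by auto
      qed (auto simp: fdir_def)
      then show ?thesis unfolding z by simp
    qed
    have nuEB: "emeasure \<nu> (E \<inter> B') = ennreal Nprod * (\<integral>\<^sup>+w. ennreal (fdir P N w) * indicator B' w \<partial>PL)"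
      if B': "B' \<in> sets PL" for B'
    proof -
      have "emeasure \<nu> (E \<inter> B') = (\<integral>\<^sup>+w. (\<Prod>k\<in>P. betad (N k) (w k)) * indicator (E \<inter> B') w \<partial>PL)"
        unfolding \<nu>_def by (rule emeasure_density[OF bm sets.Int[OF Em' B']])
      also have "\<dots> = (\<integral>\<^sup>+w. ennreal Nprod * (ennreal (fdir P N w) * indicator B' w) \<partial>PL)"
      proof (rule nn_integral_cong)
        fix w assume w: "w \<in> space PL"
        have "indicator (E \<inter> B') w = (indicator E w * indicator B' w :: ennreal)"
          by (simp add: indicator_def)
        then show "(\<Prod>k\<in>P. betad (N k) (w k)) * indicator (E \<inter> B') w = ennreal Nprod * (ennreal (fdir P N w) * indicator B' w)"
          using pw[OF w] by (simp add: mult.assoc[symmetric])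
      qed
      also have "\<dots> = ennreal Nprod * (\<integral>\<^sup>+w. ennreal (fdir P N w) * indicator B' w \<partial>PL)"
        by (rule nn_integral_cmult) (use fdm borel_measurable_indicator[OF B'] in \<open>rule borel_measurable_times_ennreal\<close>)
      finally show ?thesis .
    qed
    have nuE: "emeasure \<nu> E = ennreal (Nprod / c0)"
    proof -
      have "emeasure \<nu> E = emeasure \<nu> (E \<inter> space PL)" using sets.sets_into_space[OF Em'] by (simp add: Int_absorb2)
      also have "\<dots> = ennreal Nprod * (\<integral>\<^sup>+w. ennreal (fdir P N w) * indicator (space PL) w \<partial>PL)"
        by (rule nuEB) simp
      also have "(\<integral>\<^sup>+w. ennreal (fdir P N w) * indicator (space PL) w \<partial>PL) = (\<integral>\<^sup>+w. ennreal (fdir P N w) \<partial>PL)"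
        by (intro nn_integral_cong) simp
      also have "ennreal Nprod * \<dots> = ennreal (Nprod / c0)"
        unfolding If using Npos c0pos by (simp add: ennreal_mult[symmetric])
      finally show ?thesis .
    qed
    show ?thesis
    proof (rule measure_eqI)
      show "sets (uniform_measure \<nu> E) = sets \<delta>" unfolding \<nu>_def \<delta>_def by simp
    next
      fix B assume "B \<in> sets (uniform_measure \<nu> E)"
      then have B: "B \<in> sets PL" unfolding \<nu>_def by simp
      define J where "J = (\<integral>\<^sup>+w. ennreal (fdir P N w) * indicator B w \<partial>PL)"
      have dB: "emeasure \<delta> B = ennreal c0 * J"
      proof -
        have "emeasure \<delta> B = (\<integral>\<^sup>+w. ennreal (c0 * fdir P N w) * indicator B w \<partial>PL)"
          unfolding \<delta>_def by (rule emeasure_density[OF fdmr B])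
        also have "\<dots> = (\<integral>\<^sup>+w. ennreal c0 * (ennreal (fdir P N w) * indicator B w) \<partial>PL)"
          using c0pos fdir_nonneg by (intro nn_integral_cong) (simp add: ennreal_mult mult.assoc)
        also have "\<dots> = ennreal c0 * J"
          unfolding J_def by (rule nn_integral_cmult) (use fdm borel_measurable_indicator[OF B] in \<open>rule borel_measurable_times_ennreal\<close>)
        finally show ?thesis .
      qed
      have "emeasure (uniform_measure \<nu> E) B = emeasure \<nu> (E \<inter> B) / emeasure \<nu> E"
        using Em' B unfolding \<nu>_def by (intro emeasure_uniform_measure) auto
      also have "\<dots> = (ennreal Nprod * J) / ennreal (Nprod / c0)"
        unfolding nuEB[OF B] nuE J_def ..
      also have "\<dots> = ennreal Nprod * J * ennreal (c0 / Nprod)"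
        using Npos c0pos by (simp add: divide_ennreal_def inverse_ennreal)
      also have "\<dots> = (ennreal Nprod * ennreal (c0 / Nprod)) * J"
        by (simp add: mult_ac)
      also have "ennreal Nprod * ennreal (c0 / Nprod) = ennreal c0"
        using Npos c0pos by (simp add: ennreal_mult[symmetric])
      finally show "emeasure (uniform_measure \<nu> E) B = emeasure \<delta> B" unfolding dB by (simp add: mult.commute)
    qed
  qed
  have FpM: "Fp K P \<in> measurable PM effros" unfolding PM_def by (rule Fp_measurable[OF finP])
  have lhs: "distr (uniform_measure UC {u \<in> space UC. eX K n X u \<noteq> {}}) effros (eX K n X) = distr \<delta> effros (Fp K P)"
  proof -
    have mmC: "m \<in> measurable (uniform_measure UC {u \<in> space UC. m u \<in> E}) PM"
      using mm by (simp cong: measurable_cong_sets)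
    have "eX K n X = (\<lambda>u. Fp K P (m u))" using eXm by (rule ext)
    then have "distr (uniform_measure UC {u \<in> space UC. eX K n X u \<noteq> {}}) effros (eX K n X)
        = distr (uniform_measure UC {u \<in> space UC. m u \<in> E}) effros (\<lambda>u. Fp K P (m u))"
      unfolding Cond by simp
    also have "\<dots> = distr (distr (uniform_measure UC {u \<in> space UC. m u \<in> E}) PM m) effros (Fp K P)"
      by (subst distr_distr[OF FpM mmC]) (simp add: comp_def)
    also have "\<dots> = distr \<delta> effros (Fp K P)" unfolding dcond unifeq ..
    finally show ?thesis .
  qed
  have rhs: "distr Dir effros (eN K) = distr \<delta> effros (Fp K P)"
  proof -
    have eNm: "eN K \<in> measurable Dir effros"
      using eN_measurable[OF K1, of "{0..K}"] dirichlet_prob_good(3)[of K "cell_count n X"]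
      unfolding Dir_def by (simp cong: measurable_cong_sets)
    have cm: "(\<lambda>z. Fp K P (restrict z P)) \<in> measurable Dir effros"
      using measurable_compose[OF \<rho>m FpM] .
    have "distr Dir effros (eN K) = distr Dir effros (\<lambda>z. Fp K P (restrict z P))"
    proof (rule measure_eqI)
      show "sets (distr Dir effros (eN K)) = sets (distr Dir effros (\<lambda>z. Fp K P (restrict z P)))" by simp
    next
      fix A assume "A \<in> sets (distr Dir effros (eN K))"
      then have A: "A \<in> sets effros" by simp
      have AE: "AE z in Dir. (z \<in> eN K -` A \<inter> space Dir) = (z \<in> (\<lambda>z. Fp K P (restrict z P)) -` A \<inter> space Dir)"
        using goodAE
      proof eventually_elim
        case (elim z)
        have "eN K z \<in> A \<longleftrightarrow> Fp K P (restrict z P) \<in> A"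
          by (rule effros_invariant[OF _ A]) (rule good_equiv[OF K1 PK _ elim])
        then show ?case by simp
      qed
      show "emeasure (distr Dir effros (eN K)) A = emeasure (distr Dir effros (\<lambda>z. Fp K P (restrict z P))) A"
        using emeasure_eq_AE[OF AE measurable_sets[OF eNm A] measurable_sets[OF cm A]]
        by (simp add: emeasure_distr[OF eNm A] emeasure_distr[OF cm A])
    qed
    also have "\<dots> = distr (distr Dir PM (\<lambda>z. restrict z P)) effros (Fp K P)"
      by (subst distr_distr[OF FpM \<rho>m]) (simp add: comp_def)
    also have "\<dots> = distr \<delta> effros (Fp K P)" unfolding dlaw ..
    finally show ?thesis .
  qed
  show ?thesis using lhs rhs unfolding UC_def Dir_def by simp
qed

end
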